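(* Let $R$ be a P$v$MD. Then: (1) If $I$ is a strong $t$-ideal of $R$, then $E(I)=S\cap T$, where $S=\bigcap_{P\in \mathrm{Min}(I)}R_P$ and $T=\bigcap\{R_M: M\in t\text{-Max}(R),\ M\not\supseteq I\}$. (2) If $P$ is a $t$-prime of $R$ which is not $t$-invertible, then $E(P)=(R:P)=R_P\cap T$, where $T=\bigcap\{R_M: M\in t\text{-Max}(R),\ M\not\supseteq P\}$. (3) If $P$ is a $t$-prime of $R$ which is not $t$-invertible and $R$ satisfies the ascending chain condition on radical $t$-ideals, then $P$ is a $t$-maximal ideal of the domain $E(P)$.
   Context: $R$ is an integral domain with quotient field $K\neq R$. For nonzero $R$-submodules $A,B$ of $K$, $(A:B)=\{x\in K: xB\subseteq A\}$; $E(I)=(I:I)$. For a nonzero fractional ideal $I$, $I_v=(R:(R:I))$, $I_t=\bigcup\{J_v: J\subseteq I\text{ nonzero finitely generated}\}$; $I$ is a $t$-ideal if $I=I_t$; a $t$-prime is a prime $t$-ideal; $t\text{-Max}(R)$ is the set of ideals maximal among proper $t$-ideals. $I$ is $t$-invertible if $(I(R:I))_t=R$. $R$ is a P$v$MD if $R_M$ is a valuation domain for every $M\in t\text{-Max}(R)$. An ideal $J$ is strong (a trace ideal) if $J=I(R:I)$ for some nonzero ideal $I$, equivalently $(J:J)=(R:J)$. $\mathrm{Min}(I)$ is the set of minimal primes of $I$. In (3), $t$-maximality in $E(P)$ refers to the $t$-operation of the domain $E(P)$. *)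

theory Defs
  imports Main
begin

text \<open>Setting: the quotient field K is a type 'k of class field; an integral
domain R with quotient field K is a subset of 'k that is a subring and whose
fractions exhaust 'k. All submodules of K are subsets of 'k.\<close>

definition subring_of :: "'k::field set \<Rightarrow> bool" where
  "subring_of R \<longleftrightarrow> 0 \<in> R \<and> 1 \<in> R \<and> (\<forall>a\<in>R. \<forall>b\<in>R. a + b \<in> R \<and> a * b \<in> R \<and> - a \<in> R)"

definition domain_with_qf :: "'k::field set \<Rightarrow> bool" where
  "domain_with_qf R \<longleftrightarrow> subring_of R \<and>
     (\<forall>x. \<exists>a\<in>R. \<exists>b\<in>R. b \<noteq> 0 \<and> x = a / b)"

definition rspan :: "'k::field set \<Rightarrow> 'k set \<Rightarrow> 'k set" where
  "rspan R S = {x. \<exists>F c. finite F \<and> F \<subseteq> S \<and> (\<forall>s\<in>F. c s \<in> R) \<and> x = (\<Sum>s\<in>F. c s * s)}"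

definition prod_sub :: "'k::field set \<Rightarrow> 'k set \<Rightarrow> 'k set \<Rightarrow> 'k set" where
  "prod_sub R A B = rspan R {a * b | a b. a \<in> A \<and> b \<in> B}"

definition colon :: "'k::field set \<Rightarrow> 'k set \<Rightarrow> 'k set" where
  "colon A B = {x. \<forall>b\<in>B. x * b \<in> A}"

definition Eend :: "'k::field set \<Rightarrow> 'k set" where
  "Eend I = colon I I"

definition vcl :: "'k::field set \<Rightarrow> 'k set \<Rightarrow> 'k set" where
  "vcl R I = colon R (colon R I)"

definition fin_gen :: "'k::field set \<Rightarrow> 'k set \<Rightarrow> bool" where
  "fin_gen R J \<longleftrightarrow> (\<exists>F. finite F \<and> J = rspan R F)"

definition tcl :: "'k::field set \<Rightarrow> 'k set \<Rightarrow> 'k set" where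
  "tcl R I = \<Union>{vcl R J | J. J \<subseteq> I \<and> J \<noteq> {0} \<and> fin_gen R J}"

definition ideal_of :: "'k::field set \<Rightarrow> 'k set \<Rightarrow> bool" where
  "ideal_of R I \<longleftrightarrow> I \<subseteq> R \<and> 0 \<in> I \<and> (\<forall>a\<in>I. \<forall>b\<in>I. a + b \<in> I) \<and> (\<forall>r\<in>R. \<forall>a\<in>I. r * a \<in> I)"

definition prime_of :: "'k::field set \<Rightarrow> 'k set \<Rightarrow> bool" where
  "prime_of R P \<longleftrightarrow> ideal_of R P \<and> P \<noteq> R \<and> (\<forall>a\<in>R. \<forall>b\<in>R. a * b \<in> P \<longrightarrow> a \<in> P \<or> b \<in> P)"

definition radical_of :: "'k::field set \<Rightarrow> 'k set \<Rightarrow> bool" where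
  "radical_of R I \<longleftrightarrow> ideal_of R I \<and> (\<forall>x\<in>R. \<forall>n::nat. x ^ n \<in> I \<longrightarrow> x \<in> I)"

definition t_ideal :: "'k::field set \<Rightarrow> 'k set \<Rightarrow> bool" where
  "t_ideal R I \<longleftrightarrow> ideal_of R I \<and> I \<noteq> {0} \<and> I = tcl R I"

definition t_prime :: "'k::field set \<Rightarrow> 'k set \<Rightarrow> bool" where
  "t_prime R P \<longleftrightarrow> prime_of R P \<and> t_ideal R P"

definition tMax :: "'k::field set \<Rightarrow> 'k set set" where
  "tMax R = {M. t_ideal R M \<and> M \<noteq> R \<and>
      (\<forall>N. t_ideal R N \<and> N \<noteq> R \<and> M \<subseteq> N \<longrightarrow> N = M)}"

definition t_invertible :: "'k::field set \<Rightarrow> 'k set \<Rightarrow> bool" where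
  "t_invertible R I \<longleftrightarrow> tcl R (prod_sub R I (colon R I)) = R"

definition localization :: "'k::field set \<Rightarrow> 'k set \<Rightarrow> 'k set" where
  "localization R P = {a / s | a s. a \<in> R \<and> s \<in> R \<and> s \<notin> P}"

definition valuation_domain :: "'k::field set \<Rightarrow> bool" where
  "valuation_domain V \<longleftrightarrow> (\<forall>x. x \<noteq> 0 \<longrightarrow> x \<in> V \<or> inverse x \<in> V)"

definition PvMD :: "'k::field set \<Rightarrow> bool" where
  "PvMD R \<longleftrightarrow> domain_with_qf R \<and> (\<forall>M\<in>tMax R. valuation_domain (localization R M))"

definition strong_ideal :: "'k::field set \<Rightarrow> 'k set \<Rightarrow> bool" where
  "strong_ideal R J \<longleftrightarrow> (\<exists>I. ideal_of R I \<and> I \<noteq> {0} \<and> J = prod_sub R I (colon R I))"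

definition Min_primes :: "'k::field set \<Rightarrow> 'k set \<Rightarrow> 'k set set" where
  "Min_primes R I = {P. prime_of R P \<and> I \<subseteq> P \<and>
      (\<forall>Q. prime_of R Q \<and> I \<subseteq> Q \<and> Q \<subseteq> P \<longrightarrow> Q = P)}"

definition acc_radical_t :: "'k::field set \<Rightarrow> bool" where
  "acc_radical_t R \<longleftrightarrow> (\<forall>C::nat \<Rightarrow> 'k set.
      (\<forall>n. radical_of R (C n) \<and> t_ideal R (C n)) \<and> (\<forall>n. C n \<subseteq> C (Suc n))
      \<longrightarrow> (\<exists>N. \<forall>n\<ge>N. C n = C N))"

end

theory Submission
  imports Defs
begin



lemma srD:
  assumes "subring_of R"
  shows "0 \<in> R" "1 \<in> R" "a \<in> R \<Longrightarrow> b \<in> R \<Longrightarrow> a + b \<in> R"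
    "a \<in> R \<Longrightarrow> b \<in> R \<Longrightarrow> a * b \<in> R" "a \<in> R \<Longrightarrow> - a \<in> R"
  using assms unfolding subring_of_def by auto

lemma sr_diff: "subring_of R \<Longrightarrow> a \<in> R \<Longrightarrow> b \<in> R \<Longrightarrow> a - b \<in> R"
  using srD[of R] by (metis diff_conv_add_uminus)

lemma sr_sum: assumes "subring_of R" "finite F" "\<And>s. s \<in> F \<Longrightarrow> g s \<in> R" shows "sum g F \<in> R"
  using assms(2,3) by (induction F rule: finite_induct) (simp_all add: srD[OF assms(1)])

lemma sr_power: "subring_of R \<Longrightarrow> a \<in> R \<Longrightarrow> a ^ n \<in> R"
  by (induction n) (simp_all add: srD)

lemma idealD:
  assumes "ideal_of R I"
  shows "I \<subseteq> R" "0 \<in> I" "a \<in> I \<Longrightarrow> b \<in> I \<Longrightarrow> a + b \<in> I" "r \<in> R \<Longrightarrow> a \<in> I \<Longrightarrow> r * a \<in> I"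
  using assms unfolding ideal_of_def by auto

lemma ideal_mult_right: "ideal_of R I \<Longrightarrow> r \<in> R \<Longrightarrow> a \<in> I \<Longrightarrow> a * r \<in> I"
  using idealD(4) by (metis mult.commute)

lemma ideal_sum: assumes "ideal_of R I" "finite F" "\<And>s. s \<in> F \<Longrightarrow> g s \<in> I" shows "sum g F \<in> I"
  using assms(2,3) by (induction F rule: finite_induct) (simp_all add: idealD[OF assms(1)])

lemma ideal_one: "subring_of R \<Longrightarrow> ideal_of R I \<Longrightarrow> 1 \<in> I \<Longrightarrow> I = R"
  using idealD[of R I] srD[of R] by (metis mult.right_neutral subsetI subset_antisym)

lemma ideal_neg: "subring_of R \<Longrightarrow> ideal_of R I \<Longrightarrow> a \<in> I \<Longrightarrow> - a \<in> I"
  using idealD(4)[of R I "-1" a] srD[of R] by simp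

lemma prime_power: "prime_of R P \<Longrightarrow> subring_of R \<Longrightarrow> y \<in> R \<Longrightarrow> y ^ k \<in> P \<Longrightarrow> y \<in> P"
proof (induction k)
  case 0
  then show ?case unfolding prime_of_def using ideal_one by auto
next
  case (Suc k)
  then show ?case unfolding prime_of_def using sr_power
    by (metis power_Suc)
qed

lemma prime_not_power: "prime_of R P \<Longrightarrow> subring_of R \<Longrightarrow> y \<in> R \<Longrightarrow> y \<notin> P \<Longrightarrow> y ^ k \<notin> P"
  using prime_power by blast

lemma prime_mult_notin: "prime_of R P \<Longrightarrow> a \<in> R \<Longrightarrow> b \<in> R \<Longrightarrow> a \<notin> P \<Longrightarrow> b \<notin> P \<Longrightarrow> a * b \<notin> P"
  unfolding prime_of_def by blast

lemma prime_one: "prime_of R P \<Longrightarrow> subring_of R \<Longrightarrow> 1 \<notin> P"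
  unfolding prime_of_def using ideal_one by blast

lemma rspanI: "finite F \<Longrightarrow> F \<subseteq> S \<Longrightarrow> (\<forall>s\<in>F. c s \<in> R) \<Longrightarrow> x = (\<Sum>s\<in>F. c s * s) \<Longrightarrow> x \<in> rspan R S"
  unfolding rspan_def by blast

lemma rspan_zero: "0 \<in> rspan R S"
  unfolding rspan_def by (rule CollectI, rule exI[of _ "{}"]) auto

lemma rspan_gen: "subring_of R \<Longrightarrow> s \<in> S \<Longrightarrow> s \<in> rspan R S"
  unfolding rspan_def
  by (rule CollectI, rule exI[of _ "{s}"], rule exI[of _ "\<lambda>_. 1"]) (simp add: srD)

lemma rspan_sub_ideal:
  assumes "ideal_of R I" "S \<subseteq> I" shows "rspan R S \<subseteq> I"
proof
  fix x assume "x \<in> rspan R S"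
  then obtain F c where "finite F" "F \<subseteq> S" "\<forall>s\<in>F. c s \<in> R" "x = (\<Sum>s\<in>F. c s * s)"
    unfolding rspan_def by blast
  then show "x \<in> I" using assms by (auto intro!: ideal_sum idealD(4))
qed

lemma rspan_sub_R: "subring_of R \<Longrightarrow> S \<subseteq> R \<Longrightarrow> rspan R S \<subseteq> R"
proof
  fix x assume a: "subring_of R" "S \<subseteq> R" "x \<in> rspan R S"
  then obtain F c where "finite F" "F \<subseteq> S" "\<forall>s\<in>F. c s \<in> R" "x = (\<Sum>s\<in>F. c s * s)"
    unfolding rspan_def by blast
  then show "x \<in> R" using a by (auto intro!: sr_sum srD(4))
qed

lemma rspan_add:
  assumes "x \<in> rspan R S" "y \<in> rspan R S" "subring_of R"
  shows "x + y \<in> rspan R S"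
proof -
  obtain F1 c1 where 1: "finite F1" "F1 \<subseteq> S" "\<forall>s\<in>F1. c1 s \<in> R" "x = (\<Sum>s\<in>F1. c1 s * s)"
    using assms(1) unfolding rspan_def by blast
  obtain F2 c2 where 2: "finite F2" "F2 \<subseteq> S" "\<forall>s\<in>F2. c2 s \<in> R" "y = (\<Sum>s\<in>F2. c2 s * s)"
    using assms(2) unfolding rspan_def by blast
  define c where "c s = (if s \<in> F1 then c1 s else 0) + (if s \<in> F2 then c2 s else 0)" for s
  have "(\<Sum>s\<in>F1 \<union> F2. c s * s) = (\<Sum>s\<in>F1 \<union> F2. (if s \<in> F1 then c1 s * s else 0)
      + (if s \<in> F2 then c2 s * s else 0))"
    unfolding c_def by (rule sum.cong) (auto simp: distrib_right)
  also have "\<dots> = (\<Sum>s\<in>F1 \<union> F2. (if s \<in> F1 then c1 s * s else 0))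
      + (\<Sum>s\<in>F1 \<union> F2. (if s \<in> F2 then c2 s * s else 0))"
    by (rule sum.distrib)
  also have "\<dots> = (\<Sum>s\<in>(F1 \<union> F2) \<inter> F1. c1 s * s) + (\<Sum>s\<in>(F1 \<union> F2) \<inter> F2. c2 s * s)"
    using 1 2 by (simp only: sum.inter_restrict finite_Un)
  also have "\<dots> = x + y"
  proof -
    have "(F1 \<union> F2) \<inter> F1 = F1" "(F1 \<union> F2) \<inter> F2 = F2" by blast+
    then show ?thesis using 1 2 by simp
  qed
  finally have "(\<Sum>s\<in>F1 \<union> F2. c s * s) = x + y" .
  then have "x + y = (\<Sum>s\<in>F1 \<union> F2. c s * s)" by simp
  moreover have "\<forall>s\<in>F1 \<union> F2. c s \<in> R"
  proof
    fix s assume "s \<in> F1 \<union> F2"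
    have "(if s \<in> F1 then c1 s else 0) \<in> R" "(if s \<in> F2 then c2 s else 0) \<in> R"
      using 1 2 srD(1)[OF assms(3)] by auto
    then show "c s \<in> R" unfolding c_def using srD(3)[OF assms(3)] by blast
  qed
  moreover have "finite (F1 \<union> F2)" "F1 \<union> F2 \<subseteq> S" using 1 2 by auto
  ultimately show ?thesis using rspanI[of "F1 \<union> F2" S c R "x + y"] by blast
qed

lemma rspan_mult:
  assumes "x \<in> rspan R S" "r \<in> R" "subring_of R"
  shows "r * x \<in> rspan R S"
proof -
  obtain F c where 1: "finite F" "F \<subseteq> S" "\<forall>s\<in>F. c s \<in> R" "x = (\<Sum>s\<in>F. c s * s)"
    using assms(1) unfolding rspan_def by blast
  have "r * x = (\<Sum>s\<in>F. (r * c s) * s)" using 1 by (simp add: sum_distrib_left mult.assoc)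
  moreover have "\<forall>s\<in>F. r * c s \<in> R" using 1 assms srD(4)[OF assms(3)] by blast
  ultimately show ?thesis using rspanI[of F S "\<lambda>s. r * c s" R "r * x"] 1(1,2) by blast
qed

lemma rspan_ideal: "subring_of R \<Longrightarrow> S \<subseteq> R \<Longrightarrow> ideal_of R (rspan R S)"
  unfolding ideal_of_def
  by (intro conjI ballI rspan_sub_R rspan_zero rspan_add rspan_mult) assumption+

lemma rspan_scale:
  assumes "x \<in> rspan R S" "\<And>g. g \<in> S \<Longrightarrow> a * g \<in> S"
  shows "a * x \<in> rspan R S"
proof (cases "a = 0")
  case True then show ?thesis using rspan_zero by simp
next
  case False
  obtain F c where 1: "finite F" "F \<subseteq> S" "\<forall>s\<in>F. c s \<in> R" "x = (\<Sum>s\<in>F. c s * s)"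
    using assms(1) unfolding rspan_def by blast
  have inj: "inj_on ((*) a) F" using False by (auto intro: inj_onI)
  have "(\<Sum>t\<in>(*) a ` F. c (t / a) * t) = (\<Sum>s\<in>F. c (a * s / a) * (a * s))"
    by (subst sum.reindex[OF inj]) simp
  also have "\<dots> = a * x" using 1 False by (simp add: sum_distrib_left algebra_simps)
  finally have "a * x = (\<Sum>t\<in>(*) a ` F. c (t / a) * t)" by simp
  moreover have "\<forall>t\<in>(*) a ` F. c (t / a) \<in> R" using 1 False by auto
  moreover have "(*) a ` F \<subseteq> S" using 1 assms(2) by auto
  ultimately show ?thesis using 1 rspanI[of "(*) a ` F" S "\<lambda>t. c (t / a)" R "a * x"] by blast
qed

lemma rspan_nz:
  assumes "subring_of R"
  shows "rspan R F \<noteq> {0} \<longleftrightarrow> (\<exists>f\<in>F. f \<noteq> 0)"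
proof
  assume "rspan R F \<noteq> {0}"
  then obtain x where "x \<in> rspan R F" "x \<noteq> 0" using rspan_zero by blast
  then obtain G c where 1: "G \<subseteq> F" "x = (\<Sum>s\<in>G. c s * s)" unfolding rspan_def by blast
  show "\<exists>f\<in>F. f \<noteq> 0"
  proof (rule ccontr)
    assume "\<not> ?thesis"
    then have "\<forall>s\<in>G. c s * s = 0" using 1 by auto
    then have "(\<Sum>s\<in>G. c s * s) = 0" by (intro sum.neutral) blast
    then show False using 1 \<open>x \<noteq> 0\<close> by simp
  qed
next
  assume "\<exists>f\<in>F. f \<noteq> 0"
  then show "rspan R F \<noteq> {0}" using rspan_gen[OF assms] by blast
qed

lemma colon_iff: "x \<in> colon A B \<longleftrightarrow> (\<forall>b\<in>B. x * b \<in> A)"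
  unfolding colon_def by simp

lemma colon_rspan:
  assumes "subring_of R" shows "colon R (rspan R F) = colon R F"
proof
  show "colon R (rspan R F) \<subseteq> colon R F"
    using rspan_gen[OF assms] unfolding colon_def by blast
next
  show "colon R F \<subseteq> colon R (rspan R F)"
  proof
    fix x assume x: "x \<in> colon R F"
    show "x \<in> colon R (rspan R F)" unfolding colon_iff
    proof
      fix b assume "b \<in> rspan R F"
      then obtain G c where 1: "finite G" "G \<subseteq> F" "\<forall>s\<in>G. c s \<in> R" "b = (\<Sum>s\<in>G. c s * s)"
        unfolding rspan_def by blast
      have "x * b = (\<Sum>s\<in>G. c s * (x * s))" using 1 by (simp add: sum_distrib_left algebra_simps)
      also have "\<dots> \<in> R"
      proof (rule sr_sum[OF assms 1(1)])
        fix s assume "s \<in> G"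
        then show "c s * (x * s) \<in> R" using 1 x srD(4)[OF assms] unfolding colon_iff by blast
      qed
      finally show "x * b \<in> R" .
    qed
  qed
qed

lemma vcl_rspan: "subring_of R \<Longrightarrow> vcl R (rspan R F) = vcl R F"
  unfolding vcl_def by (simp add: colon_rspan)

lemma vcl_iff: "y \<in> vcl R F \<longleftrightarrow> (\<forall>z. (\<forall>f\<in>F. z * f \<in> R) \<longrightarrow> y * z \<in> R)"
  unfolding vcl_def colon_def by (auto simp: mult.commute)

lemma vclD: "y \<in> vcl R F \<Longrightarrow> (\<And>f. f \<in> F \<Longrightarrow> z * f \<in> R) \<Longrightarrow> y * z \<in> R"
  unfolding vcl_iff by blast

lemma vclI: "(\<And>z. (\<And>f. f \<in> F \<Longrightarrow> z * f \<in> R) \<Longrightarrow> y * z \<in> R) \<Longrightarrow> y \<in> vcl R F"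
  unfolding vcl_iff by blast

lemma F_sub_vcl: "F \<subseteq> vcl R F"
  unfolding subset_eq vcl_iff by (metis mult.commute)

lemma vcl_sub: assumes "subring_of R" "F \<subseteq> R" shows "vcl R F \<subseteq> R"
proof
  fix y assume "y \<in> vcl R F"
  moreover have "\<And>f. f \<in> F \<Longrightarrow> 1 * f \<in> R" using assms(2) by auto
  ultimately have "y * 1 \<in> R" by (rule vclD)
  then show "y \<in> R" by simp
qed

lemma vcl_mono: assumes "F \<subseteq> G" shows "vcl R F \<subseteq> vcl R G"
proof
  fix y assume y: "y \<in> vcl R F"
  show "y \<in> vcl R G" unfolding vcl_iff
  proof (intro allI impI)
    fix z assume "\<forall>f\<in>G. z * f \<in> R"
    then have "\<forall>f\<in>F. z * f \<in> R" using assms by blast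
    then show "y * z \<in> R" using y unfolding vcl_iff by blast
  qed
qed

lemma vcl_idem: "vcl R (vcl R F) = vcl R F"
proof
  show "vcl R F \<subseteq> vcl R (vcl R F)" by (rule F_sub_vcl)
  show "vcl R (vcl R F) \<subseteq> vcl R F"
  proof
    fix y assume y: "y \<in> vcl R (vcl R F)"
    show "y \<in> vcl R F"
    proof (rule vclI)
      fix z assume z: "\<And>f. f \<in> F \<Longrightarrow> z * f \<in> R"
      have "z * w \<in> R" if "w \<in> vcl R F" for w
        using vclD[OF that z] by (simp add: mult.commute)
      then show "y * z \<in> R" using vclD[OF y] by blast
    qed
  qed
qed

lemma vcl_add: assumes "subring_of R" "a \<in> vcl R F" "b \<in> vcl R F" shows "a + b \<in> vcl R F"
proof (rule vclI)
  fix z assume "\<And>f. f \<in> F \<Longrightarrow> z * f \<in> R"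
  then have "a * z \<in> R" "b * z \<in> R" using vclD assms by blast+
  then show "(a + b) * z \<in> R" using srD(3)[OF assms(1)] by (simp add: distrib_right)
qed

lemma vcl_mult: assumes "subring_of R" "r \<in> R" "a \<in> vcl R F" shows "r * a \<in> vcl R F"
proof (rule vclI)
  fix z assume "\<And>f. f \<in> F \<Longrightarrow> z * f \<in> R"
  then have "a * z \<in> R" using vclD assms by blast
  then show "(r * a) * z \<in> R" using srD(4)[OF assms(1) assms(2)] by (simp add: mult.assoc)
qed

lemma vcl_zero: assumes "subring_of R" shows "0 \<in> vcl R F"
proof (rule vclI)
  fix z show "0 * z \<in> R" using srD(1)[OF assms] by simp
qed

lemma vcl_scale: assumes "y \<in> vcl R F" shows "s * y \<in> vcl R ((*) s ` F)"
proof (rule vclI)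
  fix z assume zz: "\<And>f. f \<in> (*) s ` F \<Longrightarrow> z * f \<in> R"
  have "(z * s) * f \<in> R" if "f \<in> F" for f
  proof -
    have "s * f \<in> (*) s ` F" using that by blast
    then show ?thesis using zz by (simp add: mult.assoc)
  qed
  then have "y * (z * s) \<in> R" using vclD assms by blast
  then show "(s * y) * z \<in> R" by (simp add: algebra_simps)
qed

lemma one_vcl: "1 \<in> vcl R F \<longleftrightarrow> colon R F \<subseteq> R"
  by (auto simp: vcl_iff colon_iff)

section \<open>t-closure\<close>

lemma tcl_iff:
  assumes "subring_of R" "ideal_of R I"
  shows "y \<in> tcl R I \<longleftrightarrow> (\<exists>F. finite F \<and> F \<subseteq> I \<and> (\<exists>f\<in>F. f \<noteq> 0) \<and> y \<in> vcl R F)"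
proof
  assume "y \<in> tcl R I"
  then obtain J where J: "J \<subseteq> I" "J \<noteq> {0}" "fin_gen R J" "y \<in> vcl R J"
    unfolding tcl_def by blast
  then obtain F where F: "finite F" "J = rspan R F" unfolding fin_gen_def by blast
  have "F \<subseteq> I" using J F rspan_gen[OF assms(1)] by blast
  moreover have "\<exists>f\<in>F. f \<noteq> 0" using J F rspan_nz[OF assms(1)] by simp
  moreover have "y \<in> vcl R F" using J F vcl_rspan[OF assms(1)] by simp
  ultimately show "\<exists>F. finite F \<and> F \<subseteq> I \<and> (\<exists>f\<in>F. f \<noteq> 0) \<and> y \<in> vcl R F" using F by blast
next
  assume "\<exists>F. finite F \<and> F \<subseteq> I \<and> (\<exists>f\<in>F. f \<noteq> 0) \<and> y \<in> vcl R F"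
  then obtain F where F: "finite F" "F \<subseteq> I" "\<exists>f\<in>F. f \<noteq> 0" "y \<in> vcl R F" by blast
  have "rspan R F \<subseteq> I" using rspan_sub_ideal assms F by blast
  moreover have "rspan R F \<noteq> {0}" using F rspan_nz[OF assms(1)] by simp
  moreover have "fin_gen R (rspan R F)" using F unfolding fin_gen_def by blast
  moreover have "y \<in> vcl R (rspan R F)" using F vcl_rspan[OF assms(1)] by simp
  ultimately have "vcl R (rspan R F) \<in> {vcl R J | J. J \<subseteq> I \<and> J \<noteq> {0} \<and> fin_gen R J}" by blast
  then show "y \<in> tcl R I" unfolding tcl_def using \<open>y \<in> vcl R (rspan R F)\<close> by (rule UnionI)
qed

lemma tclI:
  assumes "subring_of R" "ideal_of R I" "finite F" "F \<subseteq> I" "f \<in> F" "f \<noteq> 0" "y \<in> vcl R F"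
  shows "y \<in> tcl R I"
proof -
  have "\<exists>F. finite F \<and> F \<subseteq> I \<and> (\<exists>f\<in>F. f \<noteq> 0) \<and> y \<in> vcl R F"
    using assms(3-7) by blast
  then show ?thesis using tcl_iff[OF assms(1,2)] by simp
qed

lemma tclE:
  assumes "subring_of R" "ideal_of R I" "y \<in> tcl R I"
  obtains F where "finite F" "F \<subseteq> I" "\<exists>f\<in>F. f \<noteq> 0" "y \<in> vcl R F"
proof -
  have "\<exists>F. finite F \<and> F \<subseteq> I \<and> (\<exists>f\<in>F. f \<noteq> 0) \<and> y \<in> vcl R F"
    using tcl_iff[OF assms(1,2)] assms(3) by simp
  then show ?thesis using that by (elim exE conjE) 
qed

lemma t_idealD:
  assumes "subring_of R" "t_ideal R I" "finite F" "F \<subseteq> I" "f \<in> F" "f \<noteq> 0"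
  shows "vcl R F \<subseteq> I"
  using tclI[OF assms(1) _ assms(3,4,5,6)] assms(2) unfolding t_ideal_def by blast

lemma sub_tcl:
  assumes "subring_of R" "ideal_of R I" "a \<in> I" "a \<noteq> 0"
  shows "I \<subseteq> tcl R I"
proof
  fix x assume x: "x \<in> I"
  show "x \<in> tcl R I"
  proof (cases "x = 0")
    case True
    then show ?thesis using tclI[OF assms(1,2), of "{a}" a 0] assms vcl_zero[OF assms(1)] by auto
  next
    case False
    then show ?thesis using tclI[OF assms(1,2), of "{x}" x x] x F_sub_vcl by auto
  qed
qed

lemma tcl_sub_R:
  assumes "subring_of R" "ideal_of R I" shows "tcl R I \<subseteq> R"
proof
  fix y assume "y \<in> tcl R I"
  then obtain F where "finite F" "F \<subseteq> I" "y \<in> vcl R F" using tclE[OF assms] by blast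
  then show "y \<in> R" using vcl_sub[OF assms(1)] idealD(1)[OF assms(2)] by blast
qed

lemma tcl_ideal:
  assumes "subring_of R" "ideal_of R I" "a \<in> I" "a \<noteq> 0"
  shows "ideal_of R (tcl R I)"
  unfolding ideal_of_def
proof (intro conjI ballI)
  show "tcl R I \<subseteq> R" by (rule tcl_sub_R[OF assms(1,2)])
  show "0 \<in> tcl R I" using sub_tcl[OF assms] idealD(2)[OF assms(2)] by blast
next
  fix x y assume "x \<in> tcl R I" "y \<in> tcl R I"
  then obtain F G where F: "finite F" "F \<subseteq> I" "\<exists>f\<in>F. f \<noteq> 0" "x \<in> vcl R F"
    and G: "finite G" "G \<subseteq> I" "\<exists>f\<in>G. f \<noteq> 0" "y \<in> vcl R G"
    using tclE[OF assms(1,2)] by metis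
  have "x \<in> vcl R (F \<union> G)" "y \<in> vcl R (F \<union> G)" using F G vcl_mono by blast+
  then have "x + y \<in> vcl R (F \<union> G)" using vcl_add[OF assms(1)] by blast
  then show "x + y \<in> tcl R I" using F G tcl_iff[OF assms(1,2)] by (metis Un_iff finite_Un le_sup_iff)
next
  fix r x assume "r \<in> R" "x \<in> tcl R I"
  then obtain F where F: "finite F" "F \<subseteq> I" "\<exists>f\<in>F. f \<noteq> 0" "x \<in> vcl R F"
    using tclE[OF assms(1,2)] by metis
  then have "r * x \<in> vcl R F" using vcl_mult[OF assms(1) \<open>r \<in> R\<close>] by blast
  then show "r * x \<in> tcl R I" using F tcl_iff[OF assms(1,2)] by blast
qed

lemma tcl_idem:
  assumes "subring_of R" "ideal_of R I" "a \<in> I" "a \<noteq> 0"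
  shows "tcl R (tcl R I) = tcl R I"
proof
  have id: "ideal_of R (tcl R I)" by (rule tcl_ideal[OF assms])
  have aT: "a \<in> tcl R I" using sub_tcl[OF assms] assms(3) by blast
  show "tcl R I \<subseteq> tcl R (tcl R I)" by (rule sub_tcl[OF assms(1) id aT assms(4)])
  show "tcl R (tcl R I) \<subseteq> tcl R I"
  proof
    fix y assume "y \<in> tcl R (tcl R I)"
    then obtain F where F: "finite F" "F \<subseteq> tcl R I" "\<exists>f\<in>F. f \<noteq> 0" "y \<in> vcl R F"
      using tclE[OF assms(1) id] by metis
    have "\<forall>x\<in>F. \<exists>G. finite G \<and> G \<subseteq> I \<and> (\<exists>f\<in>G. f \<noteq> 0) \<and> x \<in> vcl R G"
      using F tcl_iff[OF assms(1,2)] by blast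
    then obtain g where g: "\<And>x. x \<in> F \<Longrightarrow> finite (g x) \<and> g x \<subseteq> I \<and> (\<exists>f\<in>g x. f \<noteq> 0) \<and> x \<in> vcl R (g x)"
      by metis
    define G where "G = insert a (\<Union>x\<in>F. g x)"
    have G: "finite G" "G \<subseteq> I" using F g assms unfolding G_def by auto
    have "F \<subseteq> vcl R G"
    proof
      fix x assume "x \<in> F"
      then have "x \<in> vcl R (g x)" "g x \<subseteq> G" using g unfolding G_def by auto
      then show "x \<in> vcl R G" using vcl_mono by blast
    qed
    then have "vcl R F \<subseteq> vcl R G" using vcl_mono vcl_idem by metis
    then show "y \<in> tcl R I" using F G tclI[OF assms(1,2) G(1,2), of a] assms unfolding G_def by blast
  qed
qed

lemma tcl_t_ideal:
  assumes "subring_of R" "ideal_of R I" "a \<in> I" "a \<noteq> 0"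
  shows "t_ideal R (tcl R I)"
proof -
  have "a \<in> tcl R I" using sub_tcl[OF assms] assms(3) by blast
  then have "tcl R I \<noteq> {0}" using assms(4) by blast
  then show ?thesis unfolding t_ideal_def using tcl_ideal[OF assms] tcl_idem[OF assms] by simp
qed




lemma t_idealE:
  assumes "t_ideal R I"
  shows "ideal_of R I" "tcl R I = I" "\<exists>a\<in>I. a \<noteq> 0"
proof -
  show "ideal_of R I" "tcl R I = I" using assms unfolding t_ideal_def by auto
  have "0 \<in> I" "I \<noteq> {0}" using assms idealD(2) unfolding t_ideal_def by auto
  then show "\<exists>a\<in>I. a \<noteq> 0" by blast
qed

lemma one_notin: "subring_of R \<Longrightarrow> ideal_of R I \<Longrightarrow> I \<noteq> R \<Longrightarrow> 1 \<notin> I"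
  using ideal_one by blast

locale pv =
  fixes R :: "'k::field set"
  assumes dom: "domain_with_qf R" and notK: "R \<noteq> UNIV" and pvmd: "PvMD R"
begin

abbreviation L where "L P \<equiv> localization R P"

lemma sub: "subring_of R" using dom unfolding domain_with_qf_def by blast
lemma frac: "\<exists>a\<in>R. \<exists>b\<in>R. b \<noteq> 0 \<and> x = a / b" using dom unfolding domain_with_qf_def by blast
lemma val: "M \<in> tMax R \<Longrightarrow> valuation_domain (L M)" using pvmd unfolding PvMD_def by blast

lemmas R0 = srD(1)[OF sub] and R1 = srD(2)[OF sub] and Radd = srD(3)[OF sub]
  and Rmult = srD(4)[OF sub] and Rneg = srD(5)[OF sub]

lemma tMaxD:
  assumes "M \<in> tMax R"
  shows "t_ideal R M" "M \<noteq> R" "\<And>N. t_ideal R N \<Longrightarrow> N \<noteq> R \<Longrightarrow> M \<subseteq> N \<Longrightarrow> N = M"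
  using assms unfolding tMax_def by auto

lemma tMax_ideal: "M \<in> tMax R \<Longrightarrow> ideal_of R M"
  using tMaxD(1) t_idealE(1) by blast

lemma valD: "valuation_domain V \<Longrightarrow> x \<noteq> 0 \<Longrightarrow> x \<notin> V \<Longrightarrow> inverse x \<in> V"
  unfolding valuation_domain_def by blast

section \<open>Existence of t-maximal ideals\<close>

lemma exists_tmax:
  assumes I: "t_ideal R I" "I \<noteq> R"
  shows "\<exists>M\<in>tMax R. I \<subseteq> M"
proof -
  define A where "A = {N. t_ideal R N \<and> N \<noteq> R \<and> I \<subseteq> N}"
  have IA: "I \<in> A" using I unfolding A_def by blast
  obtain a where a: "a \<in> I" "a \<noteq> 0" using t_idealE(3)[OF I(1)] by blast
  have "\<Union>C \<in> A" if C: "C \<noteq> {}" "subset.chain A C" for C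
  proof -
    have CA: "C \<subseteq> A" and ch: "\<And>X Y. X \<in> C \<Longrightarrow> Y \<in> C \<Longrightarrow> X \<subseteq> Y \<or> Y \<subseteq> X"
      using C(2) unfolding subset_chain_def by auto
    obtain N0 where N0: "N0 \<in> C" using C(1) by blast
    have idN: "ideal_of R N" if "N \<in> C" for N using CA that t_idealE(1) unfolding A_def by blast
    have id: "ideal_of R (\<Union>C)" unfolding ideal_of_def
    proof (intro conjI ballI)
      show "\<Union>C \<subseteq> R" using idN idealD(1) by blast
      show "0 \<in> \<Union>C" using N0 idN idealD(2) by blast
    next
      fix x y assume "x \<in> \<Union>C" "y \<in> \<Union>C"
      then obtain X Y where XY: "X \<in> C" "Y \<in> C" "x \<in> X" "y \<in> Y" by blast
      show "x + y \<in> \<Union>C"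
      proof (cases "X \<subseteq> Y")
        case True
        then show ?thesis using XY idN idealD(3) by blast
      next
        case False
        then have "Y \<subseteq> X" using ch XY by blast
        then show ?thesis using XY idN idealD(3) by blast
      qed
    next
      fix r x assume "r \<in> R" "x \<in> \<Union>C"
      then show "r * x \<in> \<Union>C" using idN idealD(4) by blast
    qed
    have IC: "I \<subseteq> \<Union>C" using N0 CA unfolding A_def by blast
    have "tcl R (\<Union>C) \<subseteq> \<Union>C"
    proof
      fix y assume "y \<in> tcl R (\<Union>C)"
      then obtain F where F: "finite F" "F \<subseteq> \<Union>C" "\<exists>f\<in>F. f \<noteq> 0" "y \<in> vcl R F"
        using tclE[OF sub id] by metis
      obtain B where B: "B \<in> C" "F \<subseteq> B"
        using finite_subset_Union_chain[OF F(1) F(2) C(1) C(2)] by metis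
      have "t_ideal R B" using B CA unfolding A_def by blast
      then have "vcl R F \<subseteq> B" using t_idealD[OF sub _ F(1) B(2)] F(3) by blast
      then show "y \<in> \<Union>C" using F B by blast
    qed
    moreover have "\<Union>C \<subseteq> tcl R (\<Union>C)" using sub_tcl[OF sub id, of a] a IC by blast
    moreover have "\<Union>C \<noteq> {0}" using a IC by blast
    moreover have "\<Union>C \<noteq> R"
    proof -
      have "1 \<notin> N" if "N \<in> C" for N
        using one_notin[OF sub idN[OF that]] CA that unfolding A_def by blast
      then show ?thesis using R1 by blast
    qed
    ultimately show "\<Union>C \<in> A" unfolding A_def t_ideal_def using id IC by blast
  qed
  then obtain M where M: "M \<in> A" "\<And>X. X \<in> A \<Longrightarrow> M \<subseteq> X \<Longrightarrow> X = M"
    using subset_Zorn_nonempty[of A] IA by blast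
  have "M \<in> tMax R" unfolding tMax_def
  proof (intro CollectI conjI allI impI)
    show "t_ideal R M" "M \<noteq> R" using M(1) unfolding A_def by auto
  next
    fix N assume "t_ideal R N \<and> N \<noteq> R \<and> M \<subseteq> N"
    moreover have "I \<subseteq> M" using M(1) unfolding A_def by blast
    ultimately show "N = M" using M(2) unfolding A_def by blast
  qed
  then show ?thesis using M(1) unfolding A_def by blast
qed

lemma tcl_tmax:
  assumes "ideal_of R J" "a \<in> J" "a \<noteq> 0" "tcl R J \<noteq> R"
  shows "\<exists>M\<in>tMax R. J \<subseteq> M"
  using exists_tmax[OF tcl_t_ideal[OF sub assms(1-3)] assms(4)] sub_tcl[OF sub assms(1-3)] by blast

lemma tmax_prime:
  assumes M: "M \<in> tMax R"
  shows "prime_of R M"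
proof -
  have tM: "t_ideal R M" and idM: "ideal_of R M" and MR: "M \<noteq> R" using tMaxD[OF M] tMax_ideal[OF M] by auto
  have "a \<in> M \<or> b \<in> M" if ab: "a \<in> R" "b \<in> R" "a * b \<in> M" for a b
  proof (rule ccontr)
    assume nab: "\<not> (a \<in> M \<or> b \<in> M)"
    define D where "D = {r \<in> R. r * b \<in> M}"
    have b0: "b \<noteq> 0" using nab idealD(2)[OF idM] by auto
    have idD: "ideal_of R D" unfolding ideal_of_def D_def
    proof (intro conjI ballI)
      show "{r \<in> R. r * b \<in> M} \<subseteq> R" by blast
      show "0 \<in> {r \<in> R. r * b \<in> M}" using R0 idealD(2)[OF idM] by simp
    next
      fix x y assume "x \<in> {r \<in> R. r * b \<in> M}" "y \<in> {r \<in> R. r * b \<in> M}"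
      then show "x + y \<in> {r \<in> R. r * b \<in> M}" using Radd idealD(3)[OF idM] by (simp add: distrib_right)
    next
      fix r x assume "r \<in> R" "x \<in> {r \<in> R. r * b \<in> M}"
      then show "r * x \<in> {r \<in> R. r * b \<in> M}" using Rmult idealD(4)[OF idM] by (simp add: mult.assoc)
    qed
    have MD: "M \<subseteq> D" unfolding D_def using idealD(1)[OF idM] ideal_mult_right[OF idM ab(2)] by blast
    obtain m where m: "m \<in> M" "m \<noteq> 0" using t_idealE(3)[OF tM] by blast
    have aD: "a \<in> D" using ab unfolding D_def by simp
    have "tcl R D \<subseteq> D"
    proof
      fix y assume "y \<in> tcl R D"
      then obtain F where F: "finite F" "F \<subseteq> D" "\<exists>f\<in>F. f \<noteq> 0" "y \<in> vcl R F"
        using tclE[OF sub idD] by metis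
      have yR: "y \<in> R" using vcl_sub[OF sub] F(2,4) unfolding D_def by blast
      have "b * y \<in> vcl R ((*) b ` F)" using vcl_scale[OF F(4)] .
      moreover have "(*) b ` F \<subseteq> M" using F(2) unfolding D_def by (auto simp: mult.commute)
      moreover have "\<exists>f\<in>(*) b ` F. f \<noteq> 0" using F(3) b0 by auto
      ultimately have "b * y \<in> M" using t_idealD[OF sub tM, of "(*) b ` F"] F(1) by blast
      then show "y \<in> D" using yR unfolding D_def by (simp add: mult.commute)
    qed
    then have "t_ideal R D" unfolding t_ideal_def using idD sub_tcl[OF sub idD, of m] m MD by blast
    moreover have "D \<noteq> M" using aD nab by blast
    ultimately have "D = R" using tMaxD(3)[OF M, of D] MD by blast
    then have "1 \<in> D" using R1 by simp
    then show False using nab unfolding D_def by simp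
  qed
  then show ?thesis unfolding prime_of_def using idM MR by blast
qed

end



lemma chain_union_ideal:
  assumes "C \<noteq> {}" "\<And>N. N \<in> C \<Longrightarrow> ideal_of R N" "\<And>X Y. X \<in> C \<Longrightarrow> Y \<in> C \<Longrightarrow> X \<subseteq> Y \<or> Y \<subseteq> X"
  shows "ideal_of R (\<Union>C)"
  unfolding ideal_of_def
proof (intro conjI ballI)
  obtain N0 where N0: "N0 \<in> C" using assms(1) by blast
  show "\<Union>C \<subseteq> R" using assms(2) idealD(1) by blast
  show "0 \<in> \<Union>C" using N0 assms(2) idealD(2) by blast
next
  fix x y assume "x \<in> \<Union>C" "y \<in> \<Union>C"
  then obtain X Y where XY: "X \<in> C" "Y \<in> C" "x \<in> X" "y \<in> Y" by blast
  show "x + y \<in> \<Union>C"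
  proof (cases "X \<subseteq> Y")
    case True
    then show ?thesis using XY assms(2) idealD(3) by blast
  next
    case False
    then have "Y \<subseteq> X" using assms(3) XY by blast
    then show ?thesis using XY assms(2) idealD(3) by blast
  qed
next
  fix r x assume "r \<in> R" "x \<in> \<Union>C"
  then show "r * x \<in> \<Union>C" using assms(2) idealD(4) by blast
qed

context pv
begin

lemma locI: "a \<in> R \<Longrightarrow> s \<in> R \<Longrightarrow> s \<notin> P \<Longrightarrow> a / s \<in> L P"
  unfolding localization_def by blast

lemma locE:
  assumes "x \<in> L P"
  obtains a s where "a \<in> R" "s \<in> R" "s \<notin> P" "x = a / s"
  using assms unfolding localization_def by blast

lemma prime_ideal: "prime_of R P \<Longrightarrow> ideal_of R P"
  unfolding prime_of_def by blast

lemma prime_ne: "prime_of R P \<Longrightarrow> P \<noteq> R"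
  unfolding prime_of_def by blast

lemma prime_nz: "prime_of R P \<Longrightarrow> s \<notin> P \<Longrightarrow> s \<noteq> 0"
  using idealD(2)[OF prime_ideal] by blast

lemma R_sub_loc: assumes "prime_of R P" shows "R \<subseteq> L P"
proof
  fix x assume "x \<in> R"
  moreover have "1 \<notin> P" using prime_one[OF assms sub] .
  ultimately have "x / 1 \<in> L P" using locI R1 by blast
  then show "x \<in> L P" by simp
qed

lemma loc_mult:
  assumes P: "prime_of R P" and "x \<in> L P" "y \<in> L P"
  shows "x * y \<in> L P"
proof -
  obtain a s where a: "a \<in> R" "s \<in> R" "s \<notin> P" "x = a / s" using locE assms(2) by blast
  obtain b t where b: "b \<in> R" "t \<in> R" "t \<notin> P" "y = b / t" using locE assms(3) by blast
  have "x * y = (a * b) / (s * t)" using a b by simp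
  moreover have "s * t \<notin> P" using prime_mult_notin[OF P] a b by blast
  ultimately show ?thesis using locI Rmult a b by simp
qed

lemma loc_add:
  assumes P: "prime_of R P" and "x \<in> L P" "y \<in> L P"
  shows "x + y \<in> L P"
proof -
  obtain a s where a: "a \<in> R" "s \<in> R" "s \<notin> P" "x = a / s" using locE assms(2) by blast
  obtain b t where b: "b \<in> R" "t \<in> R" "t \<notin> P" "y = b / t" using locE assms(3) by blast
  have "s \<noteq> 0" "t \<noteq> 0" using prime_nz[OF P] a b by auto
  then have "x + y = (a * t + b * s) / (s * t)" using a b by (simp add: field_simps)
  moreover have "s * t \<notin> P" using prime_mult_notin[OF P] a b by blast
  moreover have "a * t + b * s \<in> R" using a b Rmult Radd by blast
  ultimately show ?thesis using locI Rmult a b by simp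
qed

lemma loc_div:
  assumes P: "prime_of R P" and "x \<in> L P" "t \<in> R" "t \<notin> P"
  shows "x / t \<in> L P"
proof -
  obtain a s where a: "a \<in> R" "s \<in> R" "s \<notin> P" "x = a / s" using locE assms(2) by blast
  have "x / t = a / (s * t)" using a by simp
  moreover have "s * t \<notin> P" using prime_mult_notin[OF P] a assms by blast
  ultimately show ?thesis using locI Rmult a assms by simp
qed

lemma loc_R: "prime_of R P \<Longrightarrow> x \<in> R \<Longrightarrow> x \<in> L P"
  using R_sub_loc by blast

lemma loc_power: assumes "prime_of R P" "x \<in> L P" shows "x ^ k \<in> L P"
  by (induction k) (auto intro: loc_mult[OF assms(1)] loc_R[OF assms(1) R1] assms(2))

lemma loc_mono: "P \<subseteq> Q \<Longrightarrow> L Q \<subseteq> L P"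
  unfolding localization_def by blast

lemma loc_val_mono: "valuation_domain V \<Longrightarrow> V \<subseteq> W \<Longrightarrow> valuation_domain W"
  unfolding valuation_domain_def by blast

section \<open>R is the intersection of the localizations at t-maximal ideals\<close>

lemma RInt:
  assumes "\<And>M. M \<in> tMax R \<Longrightarrow> x \<in> L M"
  shows "x \<in> R"
proof -
  define D where "D = {r \<in> R. r * x \<in> R}"
  have idD: "ideal_of R D" unfolding ideal_of_def D_def
  proof (intro conjI ballI)
    show "{r \<in> R. r * x \<in> R} \<subseteq> R" by blast
    show "0 \<in> {r \<in> R. r * x \<in> R}" using R0 by simp
  next
    fix a b assume "a \<in> {r \<in> R. r * x \<in> R}" "b \<in> {r \<in> R. r * x \<in> R}"
    then show "a + b \<in> {r \<in> R. r * x \<in> R}" using Radd by (simp add: distrib_right)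
  next
    fix r a assume "r \<in> R" "a \<in> {r \<in> R. r * x \<in> R}"
    then show "r * a \<in> {r \<in> R. r * x \<in> R}" using Rmult by (simp add: mult.assoc)
  qed
  obtain a b where ab: "a \<in> R" "b \<in> R" "b \<noteq> 0" "x = a / b" using frac by blast
  have bD: "b \<in> D" using ab unfolding D_def by simp
  have "tcl R D \<subseteq> D"
  proof
    fix y assume "y \<in> tcl R D"
    then obtain F where F: "finite F" "F \<subseteq> D" "\<exists>f\<in>F. f \<noteq> 0" "y \<in> vcl R F"
      using tclE[OF sub idD] by metis
    have yR: "y \<in> R" using vcl_sub[OF sub] F(2,4) unfolding D_def by blast
    have "\<And>f. f \<in> F \<Longrightarrow> x * f \<in> R" using F(2) unfolding D_def by (auto simp: mult.commute)
    then have "y * x \<in> R" using vclD[OF F(4)] by blast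
    then show "y \<in> D" using yR unfolding D_def by simp
  qed
  then have tD: "t_ideal R D" unfolding t_ideal_def using idD sub_tcl[OF sub idD bD ab(3)] bD ab(3) by blast
  have "D = R"
  proof (rule ccontr)
    assume "D \<noteq> R"
    then obtain M where M: "M \<in> tMax R" "D \<subseteq> M" using exists_tmax[OF tD] by blast
    obtain c s where cs: "c \<in> R" "s \<in> R" "s \<notin> M" "x = c / s" using locE assms[OF M(1)] by blast
    have "s \<noteq> 0" using cs idealD(2)[OF tMax_ideal[OF M(1)]] by blast
    then have "s * x = c" using cs by simp
    then have "s \<in> D" using cs unfolding D_def by simp
    then show False using M cs by blast
  qed
  then have "1 \<in> D" using R1 by simp
  then show "x \<in> R" unfolding D_def by simp
qed

section \<open>Primes inside a t-maximal ideal form a chain\<close>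

lemma quot_notin:
  assumes Q: "prime_of R Q" and QM: "Q \<subseteq> M" and a: "a \<in> R" "a \<notin> Q" and b: "b \<in> Q" "b \<noteq> 0"
  shows "a / b \<notin> L M"
proof
  assume "a / b \<in> L M"
  then obtain c s where cs: "c \<in> R" "s \<in> R" "s \<notin> M" "a / b = c / s" using locE by blast
  have s0: "s \<noteq> 0" "s \<notin> Q" using cs QM prime_nz[OF Q] by auto
  have "a * s = c * b" using cs(4) s0 b(2) by (simp add: field_simps)
  moreover have "c * b \<in> Q" using idealD(4)[OF prime_ideal[OF Q] cs(1) b(1)] .
  ultimately have "a * s \<in> Q" by simp
  then show False using prime_mult_notin[OF Q a(1) cs(2) a(2) s0(2)] by simp
qed

lemma chain_primes:
  assumes M: "M \<in> tMax R" and Q1: "prime_of R Q1" "Q1 \<subseteq> M" and Q2: "prime_of R Q2" "Q2 \<subseteq> M"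
  shows "Q1 \<subseteq> Q2 \<or> Q2 \<subseteq> Q1"
proof (rule ccontr)
  assume "\<not> ?thesis"
  then obtain a b where ab: "a \<in> Q1" "a \<notin> Q2" "b \<in> Q2" "b \<notin> Q1" by blast
  have R: "a \<in> R" "b \<in> R" using ab idealD(1)[OF prime_ideal[OF Q1(1)]] idealD(1)[OF prime_ideal[OF Q2(1)]] by auto
  have nz: "a \<noteq> 0" "b \<noteq> 0" using ab prime_nz[OF Q1(1)] prime_nz[OF Q2(1)] by auto
  have "a / b \<notin> L M" using quot_notin[OF Q2 R(1) ab(2) ab(3) nz(2)] .
  moreover have "b / a \<notin> L M" using quot_notin[OF Q1 R(2) ab(4) ab(1) nz(1)] .
  moreover have "a / b \<noteq> 0" using nz by simp
  ultimately show False using valD[OF val[OF M], of "a / b"] by (simp add: inverse_divide)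
qed

lemma min_in:
  assumes I: "ideal_of R I" and M: "M \<in> tMax R" "I \<subseteq> M"
  shows "\<exists>P\<in>Min_primes R I. P \<subseteq> M"
proof -
  define QQ where "QQ = {Q. prime_of R Q \<and> I \<subseteq> Q \<and> Q \<subseteq> M}"
  define P0 where "P0 = \<Inter>QQ"
  have MQ: "M \<in> QQ" unfolding QQ_def using tmax_prime[OF M(1)] M(2) by blast
  have P0M: "P0 \<subseteq> M" unfolding P0_def using MQ by blast
  have IP0: "I \<subseteq> P0" unfolding P0_def QQ_def by blast
  have idQ: "ideal_of R Q" if "Q \<in> QQ" for Q using that prime_ideal unfolding QQ_def by blast
  have idP0: "ideal_of R P0" unfolding ideal_of_def
  proof (intro conjI ballI)
    show "P0 \<subseteq> R" using P0M idealD(1)[OF tMax_ideal[OF M(1)]] by blast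
    show "0 \<in> P0" unfolding P0_def using idQ idealD(2) by blast
  next
    fix x y assume "x \<in> P0" "y \<in> P0"
    then show "x + y \<in> P0" unfolding P0_def using idQ idealD(3) by blast
  next
    fix r x assume "r \<in> R" "x \<in> P0"
    then show "r * x \<in> P0" unfolding P0_def using idQ idealD(4) by blast
  qed
  have "P0 \<noteq> R" using P0M one_notin[OF sub tMax_ideal[OF M(1)] tMaxD(2)[OF M(1)]] R1 by blast
  moreover have "a \<in> P0 \<or> b \<in> P0" if ab: "a \<in> R" "b \<in> R" "a * b \<in> P0" for a b
  proof (rule ccontr)
    assume "\<not> ?thesis"
    then obtain Q1 Q2 where Q: "Q1 \<in> QQ" "Q2 \<in> QQ" "a \<notin> Q1" "b \<notin> Q2" unfolding P0_def by blast
    have p1: "prime_of R Q1" "Q1 \<subseteq> M" and p2: "prime_of R Q2" "Q2 \<subseteq> M" using Q unfolding QQ_def by auto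
    have ab1: "a * b \<in> Q1" "a * b \<in> Q2" using ab(3) Q unfolding P0_def by auto
    show False
    proof (cases "Q1 \<subseteq> Q2")
      case True
      then have "b \<notin> Q1" using Q by blast
      then show False using prime_mult_notin[OF p1(1) ab(1,2) Q(3)] ab1 by blast
    next
      case False
      then have "Q2 \<subseteq> Q1" using chain_primes[OF M(1) p1 p2] by blast
      then have "a \<notin> Q2" using Q by blast
      then show False using prime_mult_notin[OF p2(1) ab(1,2) _ Q(4)] ab1 by blast
    qed
  qed
  ultimately have pP0: "prime_of R P0" unfolding prime_of_def using idP0 by blast
  have "P0 \<in> Min_primes R I" unfolding Min_primes_def
  proof (intro CollectI conjI allI impI)
    show "prime_of R P0" "I \<subseteq> P0" by (fact pP0, fact IP0)
  next
    fix Q assume Q: "prime_of R Q \<and> I \<subseteq> Q \<and> Q \<subseteq> P0"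
    then have "Q \<in> QQ" unfolding QQ_def using P0M by blast
    then have "P0 \<subseteq> Q" unfolding P0_def by blast
    then show "Q = P0" using Q by blast
  qed
  then show ?thesis using P0M by blast
qed

end



context pv
begin

lemma ideal_adjoin:
  assumes Q: "ideal_of R Q" and a: "a \<in> R"
  shows "ideal_of R {q + r * a | q r. q \<in> Q \<and> r \<in> R}" (is "ideal_of R ?Qa")
  unfolding ideal_of_def
proof (intro conjI ballI)
  show "?Qa \<subseteq> R" using idealD(1)[OF Q] Radd Rmult a by blast
  have "0 = 0 + 0 * a" by simp
  then show "0 \<in> ?Qa" using idealD(2)[OF Q] R0 by blast
next
  fix x y assume "x \<in> ?Qa" "y \<in> ?Qa"
  then obtain q1 r1 q2 r2 where "q1 \<in> Q" "r1 \<in> R" "x = q1 + r1 * a" "q2 \<in> Q" "r2 \<in> R" "y = q2 + r2 * a"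
    by blast
  moreover have "x + y = (q1 + q2) + (r1 + r2) * a" using calculation by (simp add: algebra_simps)
  ultimately show "x + y \<in> ?Qa" using idealD(3)[OF Q] Radd by blast
next
  fix s x assume "s \<in> R" "x \<in> ?Qa"
  then obtain q r where "q \<in> Q" "r \<in> R" "x = q + r * a" by blast
  moreover have "s * x = s * q + (s * r) * a" using calculation by (simp add: algebra_simps)
  ultimately show "s * x \<in> ?Qa" using idealD(4)[OF Q \<open>s \<in> R\<close>] Rmult[OF \<open>s \<in> R\<close>] by blast
qed

lemma MinL:
  assumes I: "ideal_of R I" and P: "P \<in> Min_primes R I" and p: "p \<in> P"
  shows "\<exists>s\<in>R. s \<notin> P \<and> (\<exists>k. s * p ^ k \<in> I)"
proof (rule ccontr)
  assume H: "\<not> ?thesis"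
  have pP: "prime_of R P" "I \<subseteq> P" and Pmin: "\<And>Q. prime_of R Q \<Longrightarrow> I \<subseteq> Q \<Longrightarrow> Q \<subseteq> P \<Longrightarrow> Q = P"
    using P unfolding Min_primes_def by auto
  have pR: "p \<in> R" using p idealD(1)[OF prime_ideal[OF pP(1)]] by blast
  define S where "S = {s * p ^ k | s k. s \<in> R \<and> s \<notin> P}"
  have IS: "I \<inter> S = {}" using H unfolding S_def by blast
  define A where "A = {Q. ideal_of R Q \<and> I \<subseteq> Q \<and> Q \<inter> S = {}}"
  have IA: "I \<in> A" unfolding A_def using I IS by blast
  have "\<Union>C \<in> A" if C: "C \<noteq> {}" "subset.chain A C" for C
  proof -
    have CA: "C \<subseteq> A" and ch: "\<And>X Y. X \<in> C \<Longrightarrow> Y \<in> C \<Longrightarrow> X \<subseteq> Y \<or> Y \<subseteq> X"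
      using C(2) unfolding subset_chain_def by auto
    have "ideal_of R (\<Union>C)" using chain_union_ideal[OF C(1) _ ch] CA unfolding A_def by blast
    moreover have "I \<subseteq> \<Union>C" using C(1) CA unfolding A_def by blast
    moreover have "\<Union>C \<inter> S = {}" using CA unfolding A_def by blast
    ultimately show ?thesis unfolding A_def by blast
  qed
  then obtain Q where Q: "Q \<in> A" "\<And>X. X \<in> A \<Longrightarrow> Q \<subseteq> X \<Longrightarrow> X = Q"
    using subset_Zorn_nonempty[of A] IA by blast
  have idQ: "ideal_of R Q" and IQ: "I \<subseteq> Q" and QS: "Q \<inter> S = {}" using Q(1) unfolding A_def by auto
  have QP: "Q \<subseteq> P"
  proof
    fix r assume r: "r \<in> Q"
    show "r \<in> P"
    proof (rule ccontr)
      assume "r \<notin> P"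
      then have "r * p ^ 0 \<in> S" using r idealD(1)[OF idQ] unfolding S_def by blast
      then show False using r QS by auto
    qed
  qed
  have Smult: "x * y \<in> S" if xyS: "x \<in> S" "y \<in> S" for x y
  proof -
    obtain s1 k1 where 1: "x = s1 * p ^ k1" "s1 \<in> R" "s1 \<notin> P" using xyS(1) unfolding S_def by blast
    obtain s2 k2 where 2: "y = s2 * p ^ k2" "s2 \<in> R" "s2 \<notin> P" using xyS(2) unfolding S_def by blast
    have "x * y = (s1 * s2) * p ^ (k1 + k2)" using 1 2 by (simp add: power_add algebra_simps)
    moreover have "s1 * s2 \<in> R" "s1 * s2 \<notin> P" using 1 2 Rmult prime_mult_notin[OF pP(1)] by auto
    ultimately show ?thesis unfolding S_def by blast
  qed
  have meet: "\<exists>q r. q \<in> Q \<and> r \<in> R \<and> q + r * a \<in> S" if a: "a \<in> R" "a \<notin> Q" for a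
  proof (rule ccontr)
    assume nm: "\<not> ?thesis"
    define Qa where "Qa = {q + r * a | q r. q \<in> Q \<and> r \<in> R}"
    have "ideal_of R Qa" unfolding Qa_def by (rule ideal_adjoin[OF idQ a(1)])
    moreover have QQa: "Q \<subseteq> Qa"
    proof
      fix q assume "q \<in> Q"
      moreover have "q = q + 0 * a" by simp
      ultimately show "q \<in> Qa" unfolding Qa_def using R0 by blast
    qed
    moreover have "Qa \<inter> S = {}" using nm unfolding Qa_def by blast
    ultimately have "Qa \<in> A" using IQ unfolding A_def by blast
    then have "Qa = Q" using Q(2) QQa by blast
    moreover have "a \<in> Qa"
    proof -
      have "a = 0 + 1 * a" by simp
      then show ?thesis unfolding Qa_def using idealD(2)[OF idQ] R1 by blast
    qed
    ultimately show False using a by blast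
  qed
  have pQ: "prime_of R Q"
  proof -
    have "1 \<in> S"
    proof -
      have "(1::'k) = 1 * p ^ 0" by simp
      then show ?thesis unfolding S_def using R1 prime_one[OF pP(1) sub] by blast
    qed
    then have "Q \<noteq> R" using QS R1 by blast
    moreover have "a \<in> Q \<or> b \<in> Q" if ab: "a \<in> R" "b \<in> R" "a * b \<in> Q" for a b
    proof (rule ccontr)
      assume "\<not> ?thesis"
      then obtain q1 r1 q2 r2 where m: "q1 \<in> Q" "r1 \<in> R" "q1 + r1 * a \<in> S" "q2 \<in> Q" "r2 \<in> R" "q2 + r2 * b \<in> S"
        using meet ab by metis
      have "(q1 + r1 * a) * (q2 + r2 * b) = q1 * (q2 + r2 * b) + (r1 * q2) * a + (r1 * r2) * (a * b)"
        by (simp add: algebra_simps)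
      moreover have "q2 + r2 * b \<in> R" using m ab Radd Rmult idealD(1)[OF idQ] by blast
      moreover have "r1 * q2 \<in> Q" using idealD(4)[OF idQ m(2) m(4)] .
      ultimately have "(q1 + r1 * a) * (q2 + r2 * b) \<in> Q"
        using ideal_mult_right[OF idQ] idealD(3)[OF idQ] idealD(4)[OF idQ] m ab Rmult by metis
      moreover have "(q1 + r1 * a) * (q2 + r2 * b) \<in> S" using Smult m by blast
      ultimately show False using QS by blast
    qed
    ultimately show ?thesis unfolding prime_of_def using idQ by blast
  qed
  have "Q = P" using Pmin[OF pQ IQ QP] .
  moreover have "p \<in> S"
  proof -
    have "p = 1 * p ^ 1" by simp
    then show ?thesis unfolding S_def using R1 prime_one[OF pP(1) sub] by blast
  qed
  ultimately show False using p QS by blast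
qed

lemma combine:
  assumes P: "prime_of R P" and I: "ideal_of R I" and F: "finite F" "F \<subseteq> R"
    and H: "\<And>f. f \<in> F \<Longrightarrow> \<exists>s\<in>R. s \<notin> P \<and> (\<exists>k. s * f ^ k \<in> I)"
  shows "\<exists>s\<in>R. s \<notin> P \<and> (\<exists>k. \<forall>f\<in>F. s * f ^ k \<in> I)"
  using F H
proof (induction F rule: finite_induct)
  case empty
  then show ?case using R1 prime_one[OF P sub] by blast
next
  case (insert g F)
  then obtain s1 k1 where 1: "s1 \<in> R" "s1 \<notin> P" "\<forall>f\<in>F. s1 * f ^ k1 \<in> I" by auto
  obtain s2 k2 where 2: "s2 \<in> R" "s2 \<notin> P" "s2 * g ^ k2 \<in> I" using insert.prems(2) by blast
  have gR: "g \<in> R" using insert.prems(1) by blast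
  have "\<forall>f\<in>insert g F. (s1 * s2) * f ^ (k1 + k2) \<in> I"
  proof
    fix f assume f: "f \<in> insert g F"
    have fR: "f \<in> R" using f insert.prems(1) by blast
    show "(s1 * s2) * f ^ (k1 + k2) \<in> I"
    proof (cases "f = g")
      case True
      have eq: "(s1 * s2) * g ^ (k1 + k2) = (s1 * g ^ k1) * (s2 * g ^ k2)" by (simp add: power_add algebra_simps)
      have "s1 * g ^ k1 \<in> R" using 1 gR Rmult sr_power[OF sub] by blast
      then have "(s1 * g ^ k1) * (s2 * g ^ k2) \<in> I" using idealD(4)[OF I] 2(3) by blast
      then show ?thesis unfolding True eq .
    next
      case False
      then have "f \<in> F" using f by blast
      have eq: "(s1 * s2) * f ^ (k1 + k2) = (s2 * f ^ k2) * (s1 * f ^ k1)" by (simp add: power_add algebra_simps)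
      have "s2 * f ^ k2 \<in> R" using 2 fR Rmult sr_power[OF sub] by blast
      then have "(s2 * f ^ k2) * (s1 * f ^ k1) \<in> I" using idealD(4)[OF I] 1(3) \<open>f \<in> F\<close> by blast
      then show ?thesis unfolding eq .
    qed
  qed
  moreover have "s1 * s2 \<in> R" "s1 * s2 \<notin> P" using 1 2 Rmult prime_mult_notin[OF P] by auto
  ultimately show ?case by blast
qed

lemma val_min:
  assumes V: "valuation_domain V" "0 \<in> V" "1 \<in> V" "\<And>x y. x \<in> V \<Longrightarrow> y \<in> V \<Longrightarrow> x * y \<in> V"
    and F: "finite F"
  shows "(\<exists>f\<in>F. f \<noteq> 0) \<longrightarrow> (\<exists>f0\<in>F. f0 \<noteq> 0 \<and> (\<forall>f\<in>F. f / f0 \<in> V))"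
  using F
proof (induction F rule: finite_induct)
  case empty
  then show ?case by simp
next
  case (insert g F)
  show ?case
  proof
    assume ex: "\<exists>f\<in>insert g F. f \<noteq> 0"
    show "\<exists>f0\<in>insert g F. f0 \<noteq> 0 \<and> (\<forall>f\<in>insert g F. f / f0 \<in> V)"
    proof (cases "\<exists>f\<in>F. f \<noteq> 0")
      case False
      then have g: "g \<noteq> 0" using ex by blast
      have "\<forall>f\<in>insert g F. f / g \<in> V" using False g V(2,3) by auto
      then show ?thesis using g by blast
    next
      case True
      then obtain f0 where f0: "f0 \<in> F" "f0 \<noteq> 0" "\<forall>f\<in>F. f / f0 \<in> V" using insert.IH by blast
      show ?thesis
      proof (cases "g / f0 \<in> V")
        case True
        then show ?thesis using f0 by blast
      next
        case False
        then have g: "g \<noteq> 0" using V(2) by auto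
        then have inv: "f0 / g \<in> V" using valD[OF V(1), of "g / f0"] False f0(2) by (simp add: inverse_divide)
        have "\<forall>f\<in>insert g F. f / g \<in> V"
        proof
          fix f assume "f \<in> insert g F"
          then show "f / g \<in> V"
          proof
            assume "f = g" then show ?thesis using g V(3) by simp
          next
            assume "f \<in> F"
            then have "(f / f0) * (f0 / g) \<in> V" using V(4) f0(3) inv by blast
            then show ?thesis using f0(2) by simp
          qed
        qed
        then show ?thesis using g by blast
      qed
    qed
  qed
qed

lemma common_denom:
  assumes P: "prime_of R P" and F: "finite F" and H: "\<And>f. f \<in> F \<Longrightarrow> h f \<in> L P"
  shows "\<exists>s\<in>R. s \<notin> P \<and> (\<forall>f\<in>F. s * h f \<in> R)"
  using F H
proof (induction F rule: finite_induct)
  case empty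
  then show ?case using R1 prime_one[OF P sub] by blast
next
  case (insert g F)
  then obtain s where s: "s \<in> R" "s \<notin> P" "\<forall>f\<in>F. s * h f \<in> R" by auto
  obtain a t where at: "a \<in> R" "t \<in> R" "t \<notin> P" "h g = a / t" using locE insert.prems by blast
  have t0: "t \<noteq> 0" using prime_nz[OF P at(3)] .
  have "\<forall>f\<in>insert g F. (s * t) * h f \<in> R"
  proof
    fix f assume "f \<in> insert g F"
    then show "(s * t) * h f \<in> R"
    proof
      assume "f = g"
      then have eq: "(s * t) * h f = s * a" using at t0 by simp
      show ?thesis unfolding eq using Rmult s at by simp
    next
      assume "f \<in> F"
      have eq: "(s * t) * h f = t * (s * h f)" by (simp add: algebra_simps)
      show ?thesis unfolding eq using Rmult s at \<open>f \<in> F\<close> by simp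
    qed
  qed
  moreover have "s * t \<in> R" "s * t \<notin> P" using s at Rmult prime_mult_notin[OF P] by auto
  ultimately show ?case by blast
qed

lemma Vpow:
  assumes F: "finite F" "F \<subseteq> R" "\<exists>f\<in>F. f \<noteq> 0" and y: "y \<in> vcl R F"
  shows "y ^ k \<in> vcl R ((\<lambda>f. f ^ k) ` F)"
proof (rule vclI)
  fix z assume z: "\<And>g. g \<in> (\<lambda>f. f ^ k) ` F \<Longrightarrow> z * g \<in> R"
  show "y ^ k * z \<in> R"
  proof (rule RInt)
    fix M assume M: "M \<in> tMax R"
    have pM: "prime_of R M" using tmax_prime[OF M] .
    have V: "valuation_domain (L M)" "0 \<in> L M" "1 \<in> L M" "\<And>x y. x \<in> L M \<Longrightarrow> y \<in> L M \<Longrightarrow> x * y \<in> L M"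
      using val[OF M] loc_R[OF pM R0] loc_R[OF pM R1] loc_mult[OF pM] by auto
    obtain f0 where f0: "f0 \<in> F" "f0 \<noteq> 0" "\<forall>f\<in>F. f / f0 \<in> L M" using val_min[OF V F(1)] F(3) by blast
    obtain s where s: "s \<in> R" "s \<notin> M" "\<forall>f\<in>F. s * (f / f0) \<in> R"
      using common_denom[OF pM F(1), of "\<lambda>f. f / f0"] f0(3) by blast
    have s0: "s \<noteq> 0" using prime_nz[OF pM s(2)] .
    have "\<And>f. f \<in> F \<Longrightarrow> (s / f0) * f \<in> R" using s(3) by (simp add: algebra_simps)
    then have yz0: "y * (s / f0) \<in> R" using vclD[OF y] by blast
    have "y / f0 = (y * (s / f0)) / s" using s0 f0(2) by simp
    then have yf0: "y / f0 \<in> L M" using loc_div[OF pM loc_R[OF pM yz0] s(1,2)] by simp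
    have "f0 ^ k \<in> (\<lambda>f. f ^ k) ` F" using f0(1) by blast
    then have "z * f0 ^ k \<in> R" using z by blast
    then have "z * f0 ^ k \<in> L M" using loc_R[OF pM] by blast
    moreover have "(y / f0) ^ k \<in> L M" using loc_power[OF pM yf0] .
    ultimately have "(z * f0 ^ k) * (y / f0) ^ k \<in> L M" using loc_mult[OF pM] by blast
    moreover have "(z * f0 ^ k) * (y / f0) ^ k = y ^ k * z" using f0(2) by (simp add: power_divide)
    ultimately show "y ^ k * z \<in> L M" by simp
  qed
qed

lemma MinT:
  assumes tI: "t_ideal R I" and P: "P \<in> Min_primes R I"
  shows "t_ideal R P"
proof -
  have pP: "prime_of R P" "I \<subseteq> P" using P unfolding Min_primes_def by auto
  have idP: "ideal_of R P" using prime_ideal[OF pP(1)] .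
  have idI: "ideal_of R I" using t_idealE(1)[OF tI] .
  obtain a where a: "a \<in> I" "a \<noteq> 0" using t_idealE(3)[OF tI] by blast
  have "tcl R P \<subseteq> P"
  proof
    fix y assume "y \<in> tcl R P"
    then obtain F where F: "finite F" "F \<subseteq> P" "\<exists>f\<in>F. f \<noteq> 0" "y \<in> vcl R F"
      using tclE[OF sub idP] by metis
    have FR: "F \<subseteq> R" using F(2) idealD(1)[OF idP] by blast
    have yR: "y \<in> R" using vcl_sub[OF sub FR] F(4) by blast
    obtain s k where s: "s \<in> R" "s \<notin> P" "\<forall>f\<in>F. s * f ^ k \<in> I"
      using combine[OF pP(1) idI F(1) FR] MinL[OF idI P] F(2) by blast
    have s0: "s \<noteq> 0" using prime_nz[OF pP(1) s(2)] .
    have "s * y ^ k \<in> vcl R ((*) s ` (\<lambda>f. f ^ k) ` F)"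
      using vcl_scale[OF Vpow[OF F(1) FR F(3) F(4)]] .
    moreover have "(*) s ` (\<lambda>f. f ^ k) ` F \<subseteq> I" using s(3) by blast
    moreover have "\<exists>g\<in>(*) s ` (\<lambda>f. f ^ k) ` F. g \<noteq> 0" using F(3) s0 by auto
    ultimately have "s * y ^ k \<in> I" using t_idealD[OF sub tI, of "(*) s ` (\<lambda>f. f ^ k) ` F"] F(1) by blast
    then have "s * y ^ k \<in> P" using pP(2) by blast
    then have "y ^ k \<in> P" using pP(1) s(1,2) sr_power[OF sub yR] unfolding prime_of_def by blast
    then show "y \<in> P" using prime_power[OF pP(1) sub yR] by blast
  qed
  moreover have "P \<subseteq> tcl R P" using sub_tcl[OF sub idP, of a] a pP(2) by blast
  moreover have "P \<noteq> {0}" using a pP(2) by blast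
  ultimately show ?thesis unfolding t_ideal_def using idP by blast
qed

end



context pv
begin

lemma memT: "x \<in> \<Inter>{L M | M. M \<in> tMax R \<and> \<not> I \<subseteq> M} \<longleftrightarrow> (\<forall>M\<in>tMax R. \<not> I \<subseteq> M \<longrightarrow> x \<in> L M)"
  by blast

lemma valP:
  assumes "prime_of R P" "t_ideal R P"
  shows "valuation_domain (L P)"
proof -
  obtain M where M: "M \<in> tMax R" "P \<subseteq> M" using exists_tmax[OF assms(2) prime_ne[OF assms(1)]] by blast
  show ?thesis using loc_val_mono[OF val[OF M(1)] loc_mono[OF M(2)]] .
qed

lemma Eend_power: "x \<in> Eend I \<Longrightarrow> i \<in> I \<Longrightarrow> x ^ k * i \<in> I"
proof (induction k)
  case 0 then show ?case by simp
next
  case (Suc k)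
  then have "x * (x ^ k * i) \<in> I" unfolding Eend_def colon_iff by blast
  then show ?case by (simp add: mult.assoc)
qed

lemma EL:
  assumes I: "ideal_of R I" and P: "P \<in> Min_primes R I" and V: "valuation_domain (L P)" and x: "x \<in> Eend I"
  shows "x \<in> L P"
proof (rule ccontr)
  assume nx: "x \<notin> L P"
  have pP: "prime_of R P" "I \<subseteq> P" using P unfolding Min_primes_def by auto
  have x0: "x \<noteq> 0" using nx loc_R[OF pP(1) R0] by auto
  have "inverse x \<in> L P" using valD[OF V x0 nx] .
  then obtain a u where au: "a \<in> R" "u \<in> R" "u \<notin> P" "inverse x = a / u" using locE by blast
  have u0: "u \<noteq> 0" using prime_nz[OF pP(1) au(3)] .
  have a0: "a \<noteq> 0" using au x0 by auto
  have xe: "x = u / a" using au(4) by (metis inverse_divide inverse_inverse_eq)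
  have aP: "a \<in> P"
  proof (rule ccontr)
    assume "a \<notin> P"
    then have "u / a \<in> L P" using locI au by blast
    then show False using nx xe by simp
  qed
  obtain s k where s: "s \<in> R" "s \<notin> P" "s * a ^ k \<in> I" using MinL[OF I P aP] by blast
  have "x ^ k * (s * a ^ k) \<in> I" using Eend_power[OF x s(3)] .
  moreover have "x ^ k * (s * a ^ k) = s * u ^ k" using xe a0 by (simp add: power_divide)
  ultimately have "s * u ^ k \<in> P" using pP(2) by auto
  moreover have "u ^ k \<notin> P" using prime_not_power[OF pP(1) sub au(2,3)] .
  ultimately show False using prime_mult_notin[OF pP(1) s(1) sr_power[OF sub au(2)] s(2)] by blast
qed

lemma T_part:
  assumes I: "ideal_of R I" and x: "x \<in> colon R I" and M: "M \<in> tMax R" "\<not> I \<subseteq> M"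
  shows "x \<in> L M"
proof -
  obtain a where a: "a \<in> I" "a \<notin> M" using M(2) by blast
  have aR: "a \<in> R" using a idealD(1)[OF I] by blast
  have a0: "a \<noteq> 0" using a idealD(2)[OF tMax_ideal[OF M(1)]] by blast
  have "x * a \<in> R" using x a unfolding colon_iff by blast
  then have "(x * a) / a \<in> L M" using locI aR a by blast
  then show ?thesis using a0 by simp
qed

lemma PLoc:
  assumes Q: "prime_of R Q" "Q \<subseteq> M" and M: "M \<in> tMax R" and a: "a \<in> Q" and u: "u \<in> R" "u \<notin> Q"
  shows "a / u \<in> L M"
proof (cases "a = 0")
  case True
  then show ?thesis using loc_R[OF tmax_prime[OF M] R0] by simp
next
  case False
  have "u / a \<notin> L M" using quot_notin[OF Q u a False] .
  moreover have "a / u \<noteq> 0" using False prime_nz[OF Q(1) u(2)] by simp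
  ultimately show ?thesis using valD[OF val[OF M], of "a / u"] by (auto simp: inverse_divide)
qed

lemma KS:
  assumes I: "ideal_of R I"
    and H1: "\<And>M. M \<in> tMax R \<Longrightarrow> \<not> I \<subseteq> M \<Longrightarrow> x \<in> L M"
    and H2: "\<And>M. M \<in> tMax R \<Longrightarrow> I \<subseteq> M \<Longrightarrow> \<exists>Q. prime_of R Q \<and> I \<subseteq> Q \<and> Q \<subseteq> M \<and> x \<in> L Q"
  shows "x \<in> colon R I"
  unfolding colon_iff
proof
  fix a assume a: "a \<in> I"
  have aR: "a \<in> R" using a idealD(1)[OF I] by blast
  show "x * a \<in> R"
  proof (rule RInt)
    fix M assume M: "M \<in> tMax R"
    have pM: "prime_of R M" using tmax_prime[OF M] .
    show "x * a \<in> L M"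
    proof (cases "I \<subseteq> M")
      case False
      show ?thesis using loc_mult[OF pM H1[OF M False] loc_R[OF pM aR]] .
    next
      case True
      then obtain Q where Q: "prime_of R Q" "I \<subseteq> Q" "Q \<subseteq> M" "x \<in> L Q" using H2[OF M] by blast
      show ?thesis
      proof (cases "x \<in> L M")
        case True
        then show ?thesis using loc_mult[OF pM _ loc_R[OF pM aR]] by blast
      next
        case False
        have x0: "x \<noteq> 0" using False loc_R[OF pM R0] by auto
        obtain b t where bt: "b \<in> R" "t \<in> R" "t \<notin> M" "inverse x = b / t"
          using valD[OF val[OF M] x0 False] locE by blast
        obtain c u where cu: "c \<in> R" "u \<in> R" "u \<notin> Q" "x = c / u" using locE[OF Q(4)] by blast
        have t0: "t \<noteq> 0" using bt idealD(2)[OF tMax_ideal[OF M]] by blast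
        have u0: "u \<noteq> 0" using prime_nz[OF Q(1) cu(3)] .
        have b0: "b \<noteq> 0" using bt x0 by auto
        have xe: "x = t / b" using bt(4) by (metis inverse_divide inverse_inverse_eq)
        have tQ: "t \<notin> Q" using bt(3) Q(3) by blast
        have bQ: "b \<notin> Q"
        proof
          assume bQ: "b \<in> Q"
          have "c / u = t / b" using xe cu(4) by simp
          then have "c * b = t * u" using u0 b0 by (simp add: field_simps)
          moreover have "c * b \<in> Q" using idealD(4)[OF prime_ideal[OF Q(1)] cu(1) bQ] .
          ultimately show False using prime_mult_notin[OF Q(1) bt(2) cu(2) tQ cu(3)] by simp
        qed
        have "a \<in> Q" using a Q(2) by blast
        then have "a / b \<in> L M" using PLoc[OF Q(1,3) M _ bt(1) bQ] by blast
        then have "(a / b) * t \<in> L M" using loc_mult[OF pM _ loc_R[OF pM bt(2)]] by blast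
        moreover have "(a / b) * t = x * a" using xe by simp
        ultimately show ?thesis by simp
      qed
    qed
  qed
qed

lemma strong_E:
  assumes S: "strong_ideal R I" and I: "ideal_of R I"
  shows "Eend I = colon R I"
proof
  show "Eend I \<subseteq> colon R I" unfolding Eend_def colon_def using idealD(1)[OF I] by blast
next
  obtain A where A: "ideal_of R A" "A \<noteq> {0}" "I = prod_sub R A (colon R A)"
    using S unfolding strong_ideal_def by blast
  define G where "G = {a * b | a b. a \<in> A \<and> b \<in> colon R A}"
  have IG: "I = rspan R G" using A(3) unfolding prod_sub_def G_def by simp
  show "colon R I \<subseteq> Eend I"
  proof
    fix x assume x: "x \<in> colon R I"
    have xb: "x * b \<in> colon R A" if b: "b \<in> colon R A" for b
      unfolding colon_iff
    proof
      fix a assume a: "a \<in> A"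
      have "a * b \<in> G" using a b unfolding G_def by blast
      then have "a * b \<in> I" using IG rspan_gen[OF sub] by blast
      then have "x * (a * b) \<in> R" using x unfolding colon_iff by blast
      then show "x * b * a \<in> R" by (simp add: algebra_simps)
    qed
    have "\<And>g. g \<in> G \<Longrightarrow> x * g \<in> G"
    proof -
      fix g assume "g \<in> G"
      then obtain a b where ab: "g = a * b" "a \<in> A" "b \<in> colon R A" unfolding G_def by blast
      then have "x * g = a * (x * b)" by (simp add: algebra_simps)
      then show "x * g \<in> G" unfolding G_def using ab xb by blast
    qed
    then have "\<And>i. i \<in> I \<Longrightarrow> x * i \<in> I" using rspan_scale IG by blast
    then show "x \<in> Eend I" unfolding Eend_def colon_iff by blast
  qed
qed

theorem part1:
  assumes tI: "t_ideal R I" and sI: "strong_ideal R I"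
  shows "Eend I = (\<Inter>P\<in>Min_primes R I. L P) \<inter> \<Inter>{L M | M. M \<in> tMax R \<and> \<not> I \<subseteq> M}"
proof -
  have I: "ideal_of R I" using t_idealE(1)[OF tI] .
  have EC: "Eend I = colon R I" using strong_E[OF sI I] .
  show ?thesis
  proof
    show "Eend I \<subseteq> (\<Inter>P\<in>Min_primes R I. L P) \<inter> \<Inter>{L M | M. M \<in> tMax R \<and> \<not> I \<subseteq> M}"
    proof
      fix x assume x: "x \<in> Eend I"
      have "x \<in> L P" if P: "P \<in> Min_primes R I" for P
      proof -
        have "prime_of R P" using P unfolding Min_primes_def by blast
        then have "valuation_domain (L P)" using valP MinT[OF tI P] by blast
        then show ?thesis using EL[OF I P _ x] by blast
      qed
      moreover have "\<forall>M\<in>tMax R. \<not> I \<subseteq> M \<longrightarrow> x \<in> L M" using T_part[OF I] x EC by blast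
      ultimately show "x \<in> (\<Inter>P\<in>Min_primes R I. L P) \<inter> \<Inter>{L M | M. M \<in> tMax R \<and> \<not> I \<subseteq> M}"
        unfolding memT[symmetric] by blast
    qed
  next
    show "(\<Inter>P\<in>Min_primes R I. L P) \<inter> \<Inter>{L M | M. M \<in> tMax R \<and> \<not> I \<subseteq> M} \<subseteq> Eend I"
    proof
      fix x assume x: "x \<in> (\<Inter>P\<in>Min_primes R I. L P) \<inter> \<Inter>{L M | M. M \<in> tMax R \<and> \<not> I \<subseteq> M}"
      have x1: "\<And>P. P \<in> Min_primes R I \<Longrightarrow> x \<in> L P" using x by blast
      have x2: "\<forall>M\<in>tMax R. \<not> I \<subseteq> M \<longrightarrow> x \<in> L M" using x unfolding memT[symmetric] by blast
      have "x \<in> colon R I"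
      proof (rule KS[OF I])
        show "\<And>M. M \<in> tMax R \<Longrightarrow> \<not> I \<subseteq> M \<Longrightarrow> x \<in> L M" using x2 by blast
      next
        fix M assume M: "M \<in> tMax R" "I \<subseteq> M"
        obtain P where P: "P \<in> Min_primes R I" "P \<subseteq> M" using min_in[OF I M] by blast
        then show "\<exists>Q. prime_of R Q \<and> I \<subseteq> Q \<and> Q \<subseteq> M \<and> x \<in> L Q"
          using x1 unfolding Min_primes_def by blast
      qed
      then show "x \<in> Eend I" using EC by simp
    qed
  qed
qed

end



context pv
begin

lemma prime_min_self: "prime_of R P \<Longrightarrow> P \<in> Min_primes R P"
  unfolding Min_primes_def by blast

lemma part2a:
  assumes tP: "t_prime R P" and nti: "\<not> t_invertible R P"
  shows "Eend P = colon R P"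
proof
  have pP: "prime_of R P" and tP': "t_ideal R P" using tP unfolding t_prime_def by auto
  have idP: "ideal_of R P" using prime_ideal[OF pP] .
  show "Eend P \<subseteq> colon R P" unfolding Eend_def colon_def using idealD(1)[OF idP] by blast
  show "colon R P \<subseteq> Eend P"
  proof
    fix x assume x: "x \<in> colon R P"
    define G where "G = {a * b | a b. a \<in> P \<and> b \<in> colon R P}"
    define J where "J = rspan R G"
    have GR: "G \<subseteq> R" unfolding G_def colon_iff by (auto simp: mult.commute)
    have idJ: "ideal_of R J" unfolding J_def using rspan_ideal[OF sub GR] .
    have one: "1 \<in> colon R P" using idealD(1)[OF idP] unfolding colon_iff by auto
    have PG: "P \<subseteq> G"
    proof
      fix p assume "p \<in> P"
      moreover have "p = p * 1" by simp
      ultimately show "p \<in> G" unfolding G_def using one by blast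
    qed
    have PJ: "P \<subseteq> J" unfolding J_def using PG rspan_gen[OF sub] by blast
    obtain a0 where a0: "a0 \<in> P" "a0 \<noteq> 0" using t_idealE(3)[OF tP'] by blast
    have "tcl R J \<noteq> R" using nti unfolding t_invertible_def J_def G_def prod_sub_def by simp
    then obtain M where M: "M \<in> tMax R" "J \<subseteq> M" using tcl_tmax[OF idJ, of a0] a0 PJ by blast
    have pM: "prime_of R M" using tmax_prime[OF M(1)] .
    have idM: "ideal_of R M" using tMax_ideal[OF M(1)] .
    have PM: "P \<subseteq> M" using PJ M(2) by blast
    show "x \<in> Eend P" unfolding Eend_def colon_iff
    proof
      fix p assume p: "p \<in> P"
      define w where "w = x * p"
      have wR: "w \<in> R" using x p unfolding w_def colon_iff by blast
      have "w \<in> G" unfolding G_def w_def using p x by (auto simp: mult.commute)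
      then have wM: "w \<in> M" using M(2) rspan_gen[OF sub] unfolding J_def by blast
      show "x * p \<in> P"
      proof (rule ccontr)
        assume "x * p \<notin> P"
        then have wP: "w \<notin> P" unfolding w_def .
        have "P \<noteq> M" using wP wM by blast
        then obtain t where t: "t \<in> M" "t \<notin> P" using PM by blast
        have tR: "t \<in> R" using t idealD(1)[OF idM] by blast
        have w0: "w \<noteq> 0" using wP idealD(2)[OF idP] by blast
        have p0: "p \<noteq> 0" using w0 unfolding w_def by simp
        have x0: "x \<noteq> 0" using w0 unfolding w_def by simp
        have t0: "t \<noteq> 0" using t idealD(2)[OF idP] by blast
        have "w / p \<notin> L M" using quot_notin[OF pP PM wR wP p p0] .
        moreover have "p / w \<noteq> 0" using p0 w0 by simp
        ultimately have "p / w \<in> L M" using valD[OF val[OF M(1)], of "p / w"] by (auto simp: inverse_divide)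
        then obtain b s where bs: "b \<in> R" "s \<in> R" "s \<notin> M" "p / w = b / s" using locE by blast
        have s0: "s \<noteq> 0" using bs idealD(2)[OF idM] by blast
        have sP: "s \<notin> P" using bs PM by blast
        have ps: "p * s = b * w" using bs(4) s0 w0 by (simp add: field_simps)
        have "b * w \<in> P" using ps idealD(4)[OF idP bs(2) p] by (simp add: mult.commute)
        then have bP: "b \<in> P" using pP bs(1) wR wP unfolding prime_of_def by blast
        have xb: "x * b = s"
        proof -
          have "b = p * s / w" using ps w0 by (simp add: field_simps)
          then have "x * b = (x * p) * s / w" by simp
          then show ?thesis using w0 unfolding w_def by simp
        qed
        show False
        proof (cases "t * x \<in> L M")
          case True
          then obtain c u where cu: "c \<in> R" "u \<in> R" "u \<notin> M" "t * x = c / u" using locE by blast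
          have u0: "u \<noteq> 0" using cu idealD(2)[OF idM] by blast
          have "t * s = (t * x) * b" using xb by (simp add: algebra_simps)
          also have "\<dots> = c * b / u" using cu by simp
          finally have "c * b = t * s * u" using u0 by (simp add: field_simps)
          moreover have "c * b \<in> P" using idealD(4)[OF idP cu(1) bP] .
          moreover have "t * s \<notin> P" using prime_mult_notin[OF pP tR bs(2) t(2) sP] .
          moreover have "u \<notin> P" using cu PM by blast
          ultimately show False using prime_mult_notin[OF pP Rmult[OF tR bs(2)] cu(2)] by simp
        next
          case False
          have "t * x \<noteq> 0" using t0 x0 by simp
          then obtain d u where du: "d \<in> R" "u \<in> R" "u \<notin> M" "inverse (t * x) = d / u"
            using valD[OF val[OF M(1)] _ False] locE by metis
          have u0: "u \<noteq> 0" using du idealD(2)[OF idM] by blast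
          have ue: "u = d * (t * x)" using du(4) u0 t0 x0 by (simp add: field_simps)
          then have "u * b = d * t * s" using xb by (simp add: algebra_simps)
          moreover have "u * b \<in> P" using idealD(4)[OF idP du(2) bP] .
          ultimately have "(d * t) * s \<in> P" by simp
          then have "d * t \<in> P" using pP Rmult[OF du(1) tR] bs(2) sP unfolding prime_of_def by blast
          then have dP: "d \<in> P" using pP du(1) tR t(2) unfolding prime_of_def by blast
          have "x * d \<in> R" using x dP unfolding colon_iff by blast
          then have "t * (x * d) \<in> M" using idealD(4)[OF idM] t ideal_mult_right[OF idM] by blast
          moreover have "t * (x * d) = u" using ue by (simp add: algebra_simps)
          ultimately show False using du(3) by simp
        qed
      qed
    qed
  qed
qed

lemma part2b:
  assumes tP: "t_prime R P" and nti: "\<not> t_invertible R P"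
  shows "colon R P = L P \<inter> \<Inter>{L M | M. M \<in> tMax R \<and> \<not> P \<subseteq> M}"
proof
  have pP: "prime_of R P" and tP': "t_ideal R P" using tP unfolding t_prime_def by auto
  have idP: "ideal_of R P" using prime_ideal[OF pP] .
  show "colon R P \<subseteq> L P \<inter> \<Inter>{L M | M. M \<in> tMax R \<and> \<not> P \<subseteq> M}"
  proof
    fix x assume x: "x \<in> colon R P"
    have "x \<in> L P" using EL[OF idP prime_min_self[OF pP] valP[OF pP tP']] x part2a[OF tP nti] by simp
    moreover have "\<forall>M\<in>tMax R. \<not> P \<subseteq> M \<longrightarrow> x \<in> L M" using T_part[OF idP x] by blast
    ultimately show "x \<in> L P \<inter> \<Inter>{L M | M. M \<in> tMax R \<and> \<not> P \<subseteq> M}" unfolding memT[symmetric] by blast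
  qed
  show "L P \<inter> \<Inter>{L M | M. M \<in> tMax R \<and> \<not> P \<subseteq> M} \<subseteq> colon R P"
  proof
    fix x assume x: "x \<in> L P \<inter> \<Inter>{L M | M. M \<in> tMax R \<and> \<not> P \<subseteq> M}"
    have x1: "x \<in> L P" using x by blast
    have x2: "\<forall>M\<in>tMax R. \<not> P \<subseteq> M \<longrightarrow> x \<in> L M" using x unfolding memT[symmetric] by blast
    show "x \<in> colon R P"
    proof (rule KS[OF idP])
      show "\<And>M. M \<in> tMax R \<Longrightarrow> \<not> P \<subseteq> M \<Longrightarrow> x \<in> L M" using x2 by blast
      show "\<And>M. M \<in> tMax R \<Longrightarrow> P \<subseteq> M \<Longrightarrow> \<exists>Q. prime_of R Q \<and> P \<subseteq> Q \<and> Q \<subseteq> M \<and> x \<in> L Q"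
        using pP x1 by blast
    qed
  qed
qed

end



context pv
begin

definition Cf :: "'k set \<Rightarrow> 'k set" where
  "Cf F = {y \<in> R. \<forall>M\<in>tMax R. F \<subseteq> M \<longrightarrow> y \<in> M}"

lemma Cf_props:
  assumes F: "F \<subseteq> R" "f \<in> F" "f \<noteq> 0"
  shows "F \<subseteq> Cf F" "radical_of R (Cf F)" "t_ideal R (Cf F)"
proof -
  show FC: "F \<subseteq> Cf F" unfolding Cf_def using F(1) by blast
  have idC: "ideal_of R (Cf F)" unfolding ideal_of_def Cf_def
  proof (intro conjI ballI)
    show "{y \<in> R. \<forall>M\<in>tMax R. F \<subseteq> M \<longrightarrow> y \<in> M} \<subseteq> R" by blast
    have "\<And>M. M \<in> tMax R \<Longrightarrow> 0 \<in> M" using idealD(2)[OF tMax_ideal] .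
    then show "0 \<in> {y \<in> R. \<forall>M\<in>tMax R. F \<subseteq> M \<longrightarrow> y \<in> M}" using R0 by simp
  next
    fix a b assume ab: "a \<in> {y \<in> R. \<forall>M\<in>tMax R. F \<subseteq> M \<longrightarrow> y \<in> M}" "b \<in> {y \<in> R. \<forall>M\<in>tMax R. F \<subseteq> M \<longrightarrow> y \<in> M}"
    have "a + b \<in> M" if "M \<in> tMax R" "F \<subseteq> M" for M
      using idealD(3)[OF tMax_ideal[OF that(1)]] ab that by simp
    then show "a + b \<in> {y \<in> R. \<forall>M\<in>tMax R. F \<subseteq> M \<longrightarrow> y \<in> M}" using Radd ab by simp
  next
    fix r a assume ra: "r \<in> R" "a \<in> {y \<in> R. \<forall>M\<in>tMax R. F \<subseteq> M \<longrightarrow> y \<in> M}"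
    have "r * a \<in> M" if "M \<in> tMax R" "F \<subseteq> M" for M
      using idealD(4)[OF tMax_ideal[OF that(1)]] ra that by simp
    then show "r * a \<in> {y \<in> R. \<forall>M\<in>tMax R. F \<subseteq> M \<longrightarrow> y \<in> M}" using Rmult ra by simp
  qed
  show "radical_of R (Cf F)" unfolding radical_of_def
  proof (intro conjI ballI allI impI)
    show "ideal_of R (Cf F)" by (fact idC)
  next
    fix x n assume x: "x \<in> R" "x ^ n \<in> Cf F"
    have "\<forall>M\<in>tMax R. F \<subseteq> M \<longrightarrow> x \<in> M"
      using x prime_power[OF tmax_prime sub x(1)] unfolding Cf_def by blast
    then show "x \<in> Cf F" unfolding Cf_def using x by blast
  qed
  have "tcl R (Cf F) \<subseteq> Cf F"
  proof
    fix y assume "y \<in> tcl R (Cf F)"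
    then obtain G where G: "finite G" "G \<subseteq> Cf F" "\<exists>g\<in>G. g \<noteq> 0" "y \<in> vcl R G"
      using tclE[OF sub idC] by metis
    have yR: "y \<in> R" using vcl_sub[OF sub] G(2,4) unfolding Cf_def by blast
    have "y \<in> M" if M: "M \<in> tMax R" "F \<subseteq> M" for M
    proof -
      have "G \<subseteq> M" using G(2) M unfolding Cf_def by blast
      then show ?thesis using t_idealD[OF sub tMaxD(1)[OF M(1)] G(1)] G(3,4) by blast
    qed
    then show "y \<in> Cf F" unfolding Cf_def using yR by blast
  qed
  then show "t_ideal R (Cf F)" unfolding t_ideal_def using idC sub_tcl[OF sub idC, of f] F FC by blast
qed

lemma Cf_mono: "F \<subseteq> F' \<Longrightarrow> Cf F \<subseteq> Cf F'"
  unfolding Cf_def by blast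

lemma acc_F0:
  assumes acc: "acc_radical_t R" and pP: "prime_of R P" and tP: "t_ideal R P"
  shows "\<exists>F0. finite F0 \<and> F0 \<subseteq> P \<and> (\<exists>f\<in>F0. f \<noteq> 0) \<and> (\<forall>M\<in>tMax R. F0 \<subseteq> M \<longrightarrow> P \<subseteq> M)"
proof -
  have PR: "P \<subseteq> R" using idealD(1)[OF prime_ideal[OF pP]] .
  obtain p0 where p0: "p0 \<in> P" "p0 \<noteq> 0" using t_idealE(3)[OF tP] by auto
  show ?thesis
  proof (rule ccontr)
  assume H: "\<not> ?thesis"
  define g where "g F = (SOME p. p \<in> P \<and> p \<notin> Cf F)" for F
  have H': "\<exists>M\<in>tMax R. F0 \<subseteq> M \<and> \<not> P \<subseteq> M" if "finite F0" "F0 \<subseteq> P" "\<exists>f\<in>F0. f \<noteq> 0" for F0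
  proof (rule ccontr)
    assume "\<not> (\<exists>M\<in>tMax R. F0 \<subseteq> M \<and> \<not> P \<subseteq> M)"
    then have "\<forall>M\<in>tMax R. F0 \<subseteq> M \<longrightarrow> P \<subseteq> M" by blast
    then have "finite F0 \<and> F0 \<subseteq> P \<and> (\<exists>f\<in>F0. f \<noteq> 0) \<and> (\<forall>M\<in>tMax R. F0 \<subseteq> M \<longrightarrow> P \<subseteq> M)"
      using that by blast
    then show False using H by blast
  qed
  have gF: "g F \<in> P \<and> g F \<notin> Cf F" if F: "finite F" "F \<subseteq> P" "p0 \<in> F" for F
  proof -
    have "\<exists>f\<in>F. f \<noteq> 0" using F(3) p0(2) by blast
    then obtain M where M: "M \<in> tMax R" "F \<subseteq> M" "\<not> P \<subseteq> M" using H'[OF F(1,2)] by blast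
    then obtain p where "p \<in> P" "p \<notin> M" by blast
    then have "p \<in> P \<and> p \<notin> Cf F" using M unfolding Cf_def by blast
    then show ?thesis unfolding g_def by (rule someI)
  qed
  define Fs where "Fs = rec_nat {p0} (\<lambda>_ F. insert (g F) F)"
  have Fs0: "Fs 0 = {p0}" and FsS: "\<And>n. Fs (Suc n) = insert (g (Fs n)) (Fs n)" unfolding Fs_def by simp_all
  have inv: "finite (Fs n) \<and> Fs n \<subseteq> P \<and> p0 \<in> Fs n" for n
  proof (induction n)
    case 0 then show ?case using Fs0 p0 by simp
  next
    case (Suc n)
    then show ?case using FsS gF[of "Fs n"] by simp
  qed
  have "\<exists>N. \<forall>n\<ge>N. Cf (Fs n) = Cf (Fs N)"
  proof -
    have "radical_of R (Cf (Fs n)) \<and> t_ideal R (Cf (Fs n))" for n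
    proof -
      have "Fs n \<subseteq> R" "p0 \<in> Fs n" using inv[of n] PR by auto
      then show ?thesis using Cf_props(2,3)[of "Fs n" p0] p0(2) by simp
    qed
    moreover have "Cf (Fs n) \<subseteq> Cf (Fs (Suc n))" for n
    proof -
      have "Fs n \<subseteq> Fs (Suc n)" using FsS[of n] by auto
      then show ?thesis by (rule Cf_mono)
    qed
    ultimately have conj: "(\<forall>n. radical_of R (Cf (Fs n)) \<and> t_ideal R (Cf (Fs n))) \<and> (\<forall>n. Cf (Fs n) \<subseteq> Cf (Fs (Suc n)))"
      by blast
    have acc': "\<And>C. (\<forall>n. radical_of R (C n) \<and> t_ideal R (C n)) \<and> (\<forall>n. C n \<subseteq> C (Suc n)) \<Longrightarrow> \<exists>N. \<forall>n\<ge>N. C n = C N"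
      using acc unfolding acc_radical_t_def by blast
    show ?thesis using acc'[OF conj] .
  qed
  then obtain N where N: "\<forall>n\<ge>N. Cf (Fs n) = Cf (Fs N)" by (rule exE)
  have N': "Cf (Fs (Suc N)) = Cf (Fs N)" using N[rule_format, of "Suc N"] by simp
  have gi: "g (Fs N) \<in> Fs (Suc N)" using FsS by simp
  have "Fs (Suc N) \<subseteq> R" "p0 \<in> Fs (Suc N)" using inv[of "Suc N"] PR by auto
  then have "Fs (Suc N) \<subseteq> Cf (Fs (Suc N))" using Cf_props(1)[of "Fs (Suc N)" p0] p0(2) by simp
  then have "g (Fs N) \<in> Cf (Fs N)" using gi N' by blast
  moreover have "g (Fs N) \<notin> Cf (Fs N)" using gF inv[of N] by blast
  ultimately show False by blast
  qed
qed

theorem part3: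
  assumes tP: "t_prime R P" and nti: "\<not> t_invertible R P" and acc: "acc_radical_t R"
  shows "P \<in> tMax (Eend P)"
proof -
  define E where "E = Eend P"
  have pP: "prime_of R P" and tP': "t_ideal R P" using tP unfolding t_prime_def by auto
  have idP: "ideal_of R P" using prime_ideal[OF pP] .
  have PR: "P \<subseteq> R" using idealD(1)[OF idP] .
  have EC: "E = colon R P" unfolding E_def using part2a[OF tP nti] .
  have ELT: "E = L P \<inter> \<Inter>{L M | M. M \<in> tMax R \<and> \<not> P \<subseteq> M}" using EC part2b[OF tP nti] by simp
  have EmemI: "x \<in> E" if "x \<in> L P" "\<forall>M\<in>tMax R. \<not> P \<subseteq> M \<longrightarrow> x \<in> L M" for x
    using that unfolding ELT memT[symmetric] by blast
  have ELP: "x \<in> L P" if "x \<in> E" for x using that unfolding ELT by blast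
  have ET: "x \<in> L M" if "x \<in> E" "M \<in> tMax R" "\<not> P \<subseteq> M" for x M
    using that unfolding ELT memT[symmetric] by blast
  have memE: "x \<in> E \<longleftrightarrow> (\<forall>p\<in>P. x * p \<in> P)" for x unfolding E_def Eend_def colon_iff by simp
  have RE: "R \<subseteq> E"
  proof
    fix r assume r: "r \<in> R"
    show "r \<in> E" unfolding memE using idealD(4)[OF idP r] by blast
  qed
  have PE: "P \<subseteq> E" using RE PR by blast
  have subE: "subring_of E" unfolding subring_of_def
  proof (intro conjI ballI)
    show "0 \<in> E" "1 \<in> E" using RE R0 R1 by auto
  next
    fix a b assume ab: "a \<in> E" "b \<in> E"
    show "a + b \<in> E" unfolding memE
    proof
      fix p assume "p \<in> P"
      then have "a * p \<in> P" "b * p \<in> P" using ab memE by auto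
      then show "(a + b) * p \<in> P" using idealD(3)[OF idP] by (simp add: distrib_right)
    qed
    show "a * b \<in> E" unfolding memE
    proof
      fix p assume "p \<in> P"
      then have "a * (b * p) \<in> P" using ab memE by auto
      then show "(a * b) * p \<in> P" by (simp add: mult.assoc)
    qed
    show "- a \<in> E" unfolding memE
    proof
      fix p assume "p \<in> P"
      then have "- (a * p) \<in> P" using ab memE ideal_neg[OF sub idP] by auto
      then show "(- a) * p \<in> P" by simp
    qed
  qed
  have idPE: "ideal_of E P" unfolding ideal_of_def
    using PE idealD(2,3)[OF idP] memE by blast
  obtain a0 where a0: "a0 \<in> P" "a0 \<noteq> 0" using t_idealE(3)[OF tP'] by blast
  have VP: "valuation_domain (L P)" using valP[OF pP tP'] .
  have LP: "0 \<in> L P" "1 \<in> L P" "\<And>x y. x \<in> L P \<Longrightarrow> y \<in> L P \<Longrightarrow> x * y \<in> L P"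
    using loc_R[OF pP R0] loc_R[OF pP R1] loc_mult[OF pP] by auto
  have decomp: "\<exists>a u. a \<in> R \<and> a \<notin> P \<and> u \<in> R \<and> u \<notin> P \<and> y = a / u" if y: "y \<in> E" "y \<notin> P" for y
  proof -
    obtain a u where au: "a \<in> R" "u \<in> R" "u \<notin> P" "y = a / u" using locE ELP[OF y(1)] by blast
    have "a \<notin> P"
    proof
      assume aP: "a \<in> P"
      have "y \<in> R"
      proof (rule RInt)
        fix M assume M: "M \<in> tMax R"
        show "y \<in> L M"
        proof (cases "P \<subseteq> M")
          case True
          then show ?thesis using PLoc[OF pP True M aP au(2,3)] au(4) by simp
        next
          case False
          then show ?thesis using ET[OF y(1) M] by blast
        qed
      qed
      moreover have "y * u = a" using au prime_nz[OF pP au(3)] by simp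
      ultimately show False using pP au aP y(2) unfolding prime_of_def by metis
    qed
    then show ?thesis using au by blast
  qed
  have tclP: "tcl E P \<subseteq> P"
  proof
    fix y assume "y \<in> tcl E P"
    then obtain G where G: "finite G" "G \<subseteq> P" "\<exists>g\<in>G. g \<noteq> 0" "y \<in> vcl E G"
      using tclE[OF subE idPE] by metis
    have yE: "y \<in> E"
    proof -
      have "\<And>g. g \<in> G \<Longrightarrow> 1 * g \<in> E" using G(2) PE by auto
      then have "y * 1 \<in> E" using vclD[OF G(4)] by blast
      then show ?thesis by simp
    qed
    obtain f0 where f0: "f0 \<in> G" "f0 \<noteq> 0" "\<forall>g\<in>G. g / f0 \<in> L P" using val_min[OF VP LP G(1)] G(3) by blast
    obtain s where s: "s \<in> R" "s \<notin> P" "\<forall>g\<in>G. s * (g / f0) \<in> R"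
      using common_denom[OF pP G(1), of "\<lambda>g. g / f0"] f0(3) by blast
    have "\<And>g. g \<in> G \<Longrightarrow> (s / f0) * g \<in> E" using s(3) RE by (auto simp: algebra_simps)
    then have "y * (s / f0) \<in> E" using vclD[OF G(4)] by blast
    then have yz: "y * (s / f0) \<in> L P" using ELP by blast
    show "y \<in> P"
    proof (rule ccontr)
      assume "y \<notin> P"
      then obtain a u where au: "a \<in> R" "a \<notin> P" "u \<in> R" "u \<notin> P" "y = a / u" using decomp yE by blast
      obtain b v where bv: "b \<in> R" "v \<in> R" "v \<notin> P" "y * (s / f0) = b / v" using locE[OF yz] by blast
      have nz: "u \<noteq> 0" "v \<noteq> 0" using prime_nz[OF pP] au bv by auto
      have "a * s / (u * f0) = b / v" using bv(4) au(5) by simp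
      then have "a * s * v = b * u * f0" using nz f0(2) by (simp add: field_simps)
      moreover have "b * u * f0 \<in> P" using idealD(4)[OF idP Rmult[OF bv(1) au(3)]] f0(1) G(2) by blast
      moreover have "a * s * v \<notin> P"
        using prime_mult_notin[OF pP Rmult[OF au(1) s(1)] bv(2) prime_mult_notin[OF pP au(1) s(1) au(2) s(2)] bv(3)] .
      ultimately show False by simp
    qed
  qed
  have tPE: "t_ideal E P" unfolding t_ideal_def
    using idPE tclP sub_tcl[OF subE idPE a0] a0 by blast
  have PneE: "P \<noteq> E" using RE R1 prime_one[OF pP sub] by blast
  obtain F0 where F0: "finite F0" "F0 \<subseteq> P" "\<exists>f\<in>F0. f \<noteq> 0" "\<forall>M\<in>tMax R. F0 \<subseteq> M \<longrightarrow> P \<subseteq> M"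
    using acc_F0[OF acc pP tP'] by blast
  have maxi: "N = P" if N: "t_ideal E N" "N \<noteq> E" "P \<subseteq> N" for N
  proof (rule ccontr)
    assume "N \<noteq> P"
    then obtain y where y: "y \<in> N" "y \<notin> P" using N(3) by blast
    have idNE: "ideal_of E N" using t_idealE(1)[OF N(1)] .
    have yE: "y \<in> E" using y idealD(1)[OF idNE] by blast
    obtain a u where au: "a \<in> R" "a \<notin> P" "u \<in> R" "u \<notin> P" "y = a / u" using decomp[OF yE y(2)] by blast
    have a0': "a \<noteq> 0" "u \<noteq> 0" using prime_nz[OF pP] au by auto
    then have y0: "y \<noteq> 0" using au(5) by simp
    define F where "F = insert y F0"
    have "colon E F \<subseteq> E"
    proof
      fix z assume z: "z \<in> colon E F"
      have zy: "z * y \<in> E" using z unfolding colon_iff F_def by blast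
      obtain b v where bv: "b \<in> R" "v \<in> R" "v \<notin> P" "z * y = b / v" using locE[OF ELP[OF zy]] by blast
      have v0: "v \<noteq> 0" using prime_nz[OF pP bv(3)] .
      have "z = (b * u) / (v * a)" using bv(4) au(5) a0' v0 by (simp add: field_simps)
      moreover have "v * a \<notin> P" using prime_mult_notin[OF pP bv(2) au(1) bv(3) au(2)] .
      ultimately have zLP: "z \<in> L P" using locI Rmult[OF bv(1) au(3)] Rmult[OF bv(2) au(1)] by simp
      have "z \<in> L M" if M: "M \<in> tMax R" "\<not> P \<subseteq> M" for M
      proof -
        obtain f where f: "f \<in> F0" "f \<notin> M" using F0(4) M by blast
        have fR: "f \<in> R" using f F0(2) PR by blast
        have f0: "f \<noteq> 0" using f idealD(2)[OF tMax_ideal[OF M(1)]] by blast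
        have "z * f \<in> E" using z f unfolding colon_iff F_def by blast
        then have "z * f \<in> L M" using ET M by blast
        then have "(z * f) / f \<in> L M" using loc_div[OF tmax_prime[OF M(1)] _ fR f(2)] by blast
        then show ?thesis using f0 by simp
      qed
      then show "z \<in> E" using EmemI zLP by blast
    qed
    then have "1 \<in> vcl E F" using one_vcl by blast
    moreover have "F \<subseteq> N" unfolding F_def using y F0(2) N(3) by blast
    moreover have "finite F" unfolding F_def using F0(1) by simp
    ultimately have "1 \<in> tcl E N" using tclI[OF subE idNE, of F y 1] y0 unfolding F_def by blast
    then have "1 \<in> N" using t_idealE(2)[OF N(1)] by simp
    then show False using ideal_one[OF subE idNE] N(2) by blast
  qed
  show ?thesis unfolding tMax_def E_def[symmetric] using tPE PneE maxi by blast
qed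

end



theorem proposition1p6:
  fixes R :: "'k::field set"
  assumes dom: "domain_with_qf R" and notK: "R \<noteq> UNIV" and pvmd: "PvMD R"
  shows
   "(\<forall>I. strong_ideal R I \<and> t_ideal R I \<longrightarrow>
        Eend I = (\<Inter>P\<in>Min_primes R I. localization R P) \<inter>
                 \<Inter>{localization R M | M. M \<in> tMax R \<and> \<not> I \<subseteq> M})
    \<and> (\<forall>P. t_prime R P \<and> \<not> t_invertible R P \<longrightarrow>
        Eend P = colon R P \<and>
        colon R P = localization R P \<inter>
                 \<Inter>{localization R M | M. M \<in> tMax R \<and> \<not> P \<subseteq> M})
    \<and> (\<forall>P. t_prime R P \<and> \<not> t_invertible R P \<and> acc_radical_t R \<longrightarrow>
        P \<in> tMax (Eend P))"
proof -
  interpret pv R using dom notK pvmd by unfold_locales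
  have 1: "\<forall>I. strong_ideal R I \<and> t_ideal R I \<longrightarrow>
        Eend I = (\<Inter>P\<in>Min_primes R I. localization R P) \<inter>
                 \<Inter>{localization R M | M. M \<in> tMax R \<and> \<not> I \<subseteq> M}"
  proof (intro allI impI)
    fix I assume "strong_ideal R I \<and> t_ideal R I"
    then show "Eend I = (\<Inter>P\<in>Min_primes R I. localization R P) \<inter>
                 \<Inter>{localization R M | M. M \<in> tMax R \<and> \<not> I \<subseteq> M}"
      using part1 by blast
  qed
  have 2: "\<forall>P. t_prime R P \<and> \<not> t_invertible R P \<longrightarrow>
        Eend P = colon R P \<and>
        colon R P = localization R P \<inter>
                 \<Inter>{localization R M | M. M \<in> tMax R \<and> \<not> P \<subseteq> M}"
  proof (intro allI impI)
    fix P assume P: "t_prime R P \<and> \<not> t_invertible R P"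
    have "Eend P = colon R P" using part2a P by blast
    moreover have "colon R P = localization R P \<inter>
                 \<Inter>{localization R M | M. M \<in> tMax R \<and> \<not> P \<subseteq> M}" using part2b P by blast
    ultimately show "Eend P = colon R P \<and>
        colon R P = localization R P \<inter>
                 \<Inter>{localization R M | M. M \<in> tMax R \<and> \<not> P \<subseteq> M}" by (rule conjI)
  qed
  have 3: "\<forall>P. t_prime R P \<and> \<not> t_invertible R P \<and> acc_radical_t R \<longrightarrow>
        P \<in> tMax (Eend P)"
  proof (intro allI impI)
    fix P assume "t_prime R P \<and> \<not> t_invertible R P \<and> acc_radical_t R"
    then show "P \<in> tMax (Eend P)" using part3 by blast
  qed
  show ?thesis using 1 2 3 by (intro conjI)
qed

end
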